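(* Let $n\in\mathbb{N}_0$, let $f\in C^{2n}(\mathbb{R}^d,\mathbb{R})$, $\underline a\in C^{2n}(\mathbb{R}^d,\mathbb{R}^d)$, $b\in C^{2n+1}(\mathbb{R}^d,\mathbb{R}^{d\times m})$, and let $L^0=\sum_{k=1}^d\tilde a^k\frac{\partial}{\partial x^k}+\frac12\sum_{k,l=1}^d\sum_{j=1}^m b^{k,j}b^{l,j}\frac{\partial^2}{\partial x^k\partial x^l}$ with $\tilde a^i=\underline a^i+\frac12\sum_{k=1}^d\sum_{l=1}^m b^{k,l}\frac{\partial b^{i,l}}{\partial x^k}$. Then for every $x_0\in\mathbb{R}^d$ $$(L^0)^n f(x_0)=\sum_{\substack{t\in LTS(S)\\ \rho(t)=n}}\ \sum_{j_1,\dots,j_{s(t)/2}=1}^m\frac{F(t)(x_0)}{2^{s(t)/2}},$$ where the elementary differentials $F(t)$ are formed with the drift $\underline a$ (not $\tilde a$) at deterministic nodes.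
   Context: Fix $d,m\ge1$, $f:\mathbb{R}^d\to\mathbb{R}$, $\underline a:\mathbb{R}^d\to\mathbb{R}^d$, $b:\mathbb{R}^d\to\mathbb{R}^{d\times m}$ with columns $b^j$ and entries $b^{k,j}$. A monotonically labelled coloured tree with $l$ nodes consists of nodes $1,\dots,l$, a father map $t':\{2,\dots,l\}\to\{1,\dots,l-1\}$ with $t'(i)<i$ (node 1 is the root), and a colour per node: $\gamma$ (root), $\tau$ (deterministic) or $\sigma_j$ (stochastic, index $j$). $LTS(S)$ is the set of trees obtainable thus: start with the single node $1$ coloured $\gamma$; at each step, if the current tree has $\lambda$ nodes and $k-1$ pairs of stochastic nodes have been added so far, either (a) add node $\lambda+1$ coloured $\tau$ with father any node in $\{1,\dots,\lambda\}$, or (b) add nodes $\lambda+1,\lambda+2$, both coloured $\sigma_{j_k}$ ($j_k$ a formal index variable), with $t'(\lambda+1)\in\{1,\dots,\lambda\}$ and $t'(\lambda+2)\in\{1,\dots,\lambda+1\}$ (node $\lambda+1$ may be the father of node $\lambda+2$). $d(t)$ = number of $\tau$-nodes, $s(t)$ = number of stochastic nodes (even; index variables $j_1,\dots,j_{s/2}$), $\rho(t)=d(t)+s(t)/2$. The index variables range over $\{1,\dots,m\}$ in the sums. Elementary differential: $g^{(k)}(x)(v_1,\dots,v_k)$ has $I$-th component $\sum_{J_1,\dots,J_k}\frac{\partial^k g^I(x)}{\partial x^{J_1}\cdots\partial x^{J_k}}v_1^{J_1}\cdots v_k^{J_k}$; for a tree with index values fixed, recursively for node $i$ with children $c_1,\dots,c_k$: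 $F_i(x)=g_i^{(k)}(x)(F_{c_1}(x),\dots,F_{c_k}(x))$, with $g_i=f$ for $\gamma$, $\underline a$ for $\tau$, $b^j$ for $\sigma_j$; $F(t):=F_1$. *)

theory Defs
  imports "HOL-Analysis.Analysis"
begin

definition pd :: "'d::finite \<Rightarrow> (real^'d \<Rightarrow> real) \<Rightarrow> real^'d \<Rightarrow> real" where
  "pd k g x = deriv (\<lambda>h. g (x + h *\<^sub>R axis k 1)) 0"

fun pds :: "'d::finite list \<Rightarrow> (real^'d \<Rightarrow> real) \<Rightarrow> real^'d \<Rightarrow> real" where
  "pds [] g = g"
| "pds (k # ks) g = pd k (pds ks g)"

definition Ck :: "nat \<Rightarrow> (real^'d::finite \<Rightarrow> real) \<Rightarrow> bool" where
  "Ck r g \<longleftrightarrow>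
     (\<forall>ks::'d list. length ks < r \<longrightarrow>
        (\<forall>i x. (\<lambda>h. pds ks g (x + h *\<^sub>R axis i 1)) differentiable (at 0))) \<and>
     (\<forall>ks::'d list. length ks \<le> r \<longrightarrow> continuous_on UNIV (pds ks g))"

text \<open>Colours: root gamma, deterministic tau, stochastic sigma with index-variable number k
  (meaning the formal index variable j_k).\<close>
datatype colour = Root | Det | Sto nat

text \<open>A tree with l nodes is a list of length l; entry i-1 is (father of node i, colour of node i).
  The root (node 1) has dummy father 0.\<close>
type_synonym ltree = "(nat \<times> colour) list"

definition s_nodes :: "ltree \<Rightarrow> nat" where
  "s_nodes t = length (filter (\<lambda>p. case snd p of Sto _ \<Rightarrow> True | _ \<Rightarrow> False) t)"

definition d_nodes :: "ltree \<Rightarrow> nat" where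
  "d_nodes t = length (filter (\<lambda>p. snd p = Det) t)"

definition rho :: "ltree \<Rightarrow> nat" where
  "rho t = d_nodes t + s_nodes t div 2"

inductive_set LTS :: "ltree set" where
  base: "[(0, Root)] \<in> LTS"
| det: "\<lbrakk>t \<in> LTS; 1 \<le> p; p \<le> length t\<rbrakk> \<Longrightarrow> t @ [(p, Det)] \<in> LTS"
| sto: "\<lbrakk>t \<in> LTS; 1 \<le> p; p \<le> length t; 1 \<le> q; q \<le> length t + 1\<rbrakk> \<Longrightarrow>
         t @ [(p, Sto (s_nodes t div 2 + 1)), (q, Sto (s_nodes t div 2 + 1))] \<in> LTS"

definition children :: "ltree \<Rightarrow> nat \<Rightarrow> nat list" where
  "children t i = filter (\<lambda>c. fst (t ! (c - 1)) = i) [i + 1 ..< length t + 1]"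

definition dapply :: "(real^'d::finite \<Rightarrow> real) \<Rightarrow> (real^'d \<Rightarrow> real^'d) list \<Rightarrow> real^'d \<Rightarrow> real" where
  "dapply h vs x = (\<Sum>Js \<in> {Js::'d list. length Js = length vs}.
      pds Js h x * (\<Prod>i<length vs. (vs ! i) x $ (Js ! i)))"

text \<open>Component I of the node function; js!(k-1) is the value of the index variable j_k.\<close>
fun node_fun :: "(real^'d::finite \<Rightarrow> real^'d) \<Rightarrow> (real^'d \<Rightarrow> real^'m::finite^'d) \<Rightarrow> 'm list
                  \<Rightarrow> colour \<Rightarrow> 'd \<Rightarrow> real^'d \<Rightarrow> real" where
  "node_fun a b js Det I = (\<lambda>y. a y $ I)"
| "node_fun a b js (Sto k) I = (\<lambda>y. b y $ I $ (js ! (k - 1)))"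
| "node_fun a b js Root I = (\<lambda>y. 0)"

text \<open>F_i for non-root nodes, computed with fuel (length t suffices since children have larger labels).\<close>
fun Fnode :: "nat \<Rightarrow> (real^'d::finite \<Rightarrow> real^'d) \<Rightarrow> (real^'d \<Rightarrow> real^'m::finite^'d) \<Rightarrow> 'm list
               \<Rightarrow> ltree \<Rightarrow> nat \<Rightarrow> real^'d \<Rightarrow> real^'d" where
  "Fnode 0 a b js t i = (\<lambda>x. 0)"
| "Fnode (Suc n) a b js t i = (\<lambda>x. \<chi> I. dapply (node_fun a b js (snd (t ! (i - 1))) I)
                                          (map (Fnode n a b js t) (children t i)) x)"

definition elemF :: "(real^'d::finite \<Rightarrow> real) \<Rightarrow> (real^'d \<Rightarrow> real^'d) \<Rightarrow> (real^'d \<Rightarrow> real^'m::finite^'d)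
                     \<Rightarrow> 'm list \<Rightarrow> ltree \<Rightarrow> real^'d \<Rightarrow> real" where
  "elemF f a b js t x = dapply f (map (Fnode (length t) a b js t) (children t 1)) x"

definition atil :: "(real^'d::finite \<Rightarrow> real^'d) \<Rightarrow> (real^'d \<Rightarrow> real^'m::finite^'d) \<Rightarrow> 'd \<Rightarrow> real^'d \<Rightarrow> real" where
  "atil a b i x = a x $ i + 1/2 * (\<Sum>k\<in>UNIV. \<Sum>l\<in>UNIV. b x $ k $ l * pd k (\<lambda>y. b y $ i $ l) x)"

definition L0 :: "(real^'d::finite \<Rightarrow> real^'d) \<Rightarrow> (real^'d \<Rightarrow> real^'m::finite^'d)
                  \<Rightarrow> (real^'d \<Rightarrow> real) \<Rightarrow> real^'d \<Rightarrow> real" where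
  "L0 a b g x = (\<Sum>k\<in>UNIV. atil a b k x * pd k g x)
     + 1/2 * (\<Sum>k\<in>UNIV. \<Sum>l\<in>UNIV. \<Sum>j\<in>UNIV. b x $ k $ j * b x $ l $ j * pd k (pd l g) x)"

end

theory Submission
  imports Defs
begin


definition pdiff :: "'d::finite \<Rightarrow> (real^'d \<Rightarrow> real) \<Rightarrow> real^'d \<Rightarrow> bool" where
  "pdiff k g x \<longleftrightarrow> (\<lambda>h. g (x + h *\<^sub>R axis k 1)) differentiable (at 0)"

lemma pd_DERIV: "pdiff k g x \<Longrightarrow> ((\<lambda>h. g (x + h *\<^sub>R axis k 1)) has_real_derivative pd k g x) (at 0)"
  unfolding pdiff_def pd_def by (simp add: DERIV_deriv_iff_real_differentiable)

lemma pd_eqI: "((\<lambda>h. g (x + h *\<^sub>R axis k 1)) has_real_derivative D) (at 0) \<Longrightarrow> pd k g x = D"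
  unfolding pd_def by (rule DERIV_imp_deriv)

lemma pdiffI: "((\<lambda>h. g (x + h *\<^sub>R axis k 1)) has_real_derivative D) (at 0) \<Longrightarrow> pdiff k g x"
  unfolding pdiff_def real_differentiable_def by blast

lemma pdiff_add: "pdiff k u x \<Longrightarrow> pdiff k v x \<Longrightarrow> pdiff k (\<lambda>y. u y + v y) x"
  and pd_add: "pdiff k u x \<Longrightarrow> pdiff k v x \<Longrightarrow> pd k (\<lambda>y. u y + v y) x = pd k u x + pd k v x"
  by (auto intro!: pdiffI pd_eqI DERIV_add pd_DERIV)

lemma pdiff_mult: "pdiff k u x \<Longrightarrow> pdiff k v x \<Longrightarrow> pdiff k (\<lambda>y. u y * v y) x"
  and pd_mult: "pdiff k u x \<Longrightarrow> pdiff k v x \<Longrightarrow> pd k (\<lambda>y. u y * v y) x = pd k u x * v x + u x * pd k v x"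
  by (auto intro!: pdiffI pd_eqI dest!: pd_DERIV dest: DERIV_mult simp: algebra_simps)

lemma pdiff_const: "pdiff k (\<lambda>y. c) x" and pd_const: "pd k (\<lambda>y. c) x = 0"
  by (auto intro!: pdiffI[where D=0] pd_eqI)

lemma pdiff_sum: "finite S \<Longrightarrow> (\<And>i. i \<in> S \<Longrightarrow> pdiff k (u i) x) \<Longrightarrow> pdiff k (\<lambda>y. \<Sum>i\<in>S. u i y) x"
  and pd_sum: "finite S \<Longrightarrow> (\<And>i. i \<in> S \<Longrightarrow> pdiff k (u i) x) \<Longrightarrow> pd k (\<lambda>y. \<Sum>i\<in>S. u i y) x = (\<Sum>i\<in>S. pd k (u i) x)"
proof -
  assume "finite S" "\<And>i. i \<in> S \<Longrightarrow> pdiff k (u i) x"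
  then have "((\<lambda>h. \<Sum>i\<in>S. u i (x + h *\<^sub>R axis k 1)) has_real_derivative (\<Sum>i\<in>S. pd k (u i) x)) (at 0)"
    by (intro DERIV_sum pd_DERIV) auto
  then show "pdiff k (\<lambda>y. \<Sum>i\<in>S. u i y) x" "pd k (\<lambda>y. \<Sum>i\<in>S. u i y) x = (\<Sum>i\<in>S. pd k (u i) x)"
    by (auto intro: pdiffI pd_eqI)
qed

lemma pd_prod_aux: "finite S \<Longrightarrow> (\<And>i. i \<in> S \<Longrightarrow> pdiff k (u i) x) \<Longrightarrow>
   pdiff k (\<lambda>y. \<Prod>i\<in>S. u i y) x \<and> pd k (\<lambda>y. \<Prod>i\<in>S. u i y) x = (\<Sum>i\<in>S. pd k (u i) x * (\<Prod>j\<in>S-{i}. u j x))"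
proof (induction S rule: finite_induct)
  case empty
  then show ?case by (simp add: pdiff_const pd_const)
next
  case (insert a S)
  have e: "(\<lambda>y. \<Prod>i\<in>insert a S. u i y) = (\<lambda>y. u a y * (\<Prod>i\<in>S. u i y))"
    using insert by auto
  have p: "pdiff k (u a) x" using insert by auto
  from insert have IH: "pdiff k (\<lambda>y. \<Prod>i\<in>S. u i y) x" "pd k (\<lambda>y. \<Prod>i\<in>S. u i y) x = (\<Sum>i\<in>S. pd k (u i) x * (\<Prod>j\<in>S-{i}. u j x))"
    by auto
  have d: "\<And>i. i \<in> S \<Longrightarrow> insert a S - {i} = insert a (S - {i})" using insert by auto
  have r: "(\<Sum>i\<in>insert a S. pd k (u i) x * (\<Prod>j\<in>insert a S-{i}. u j x))
     = pd k (u a) x * (\<Prod>j\<in>S. u j x) + u a x * (\<Sum>i\<in>S. pd k (u i) x * (\<Prod>j\<in>S-{i}. u j x))"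
  proof -
    have "insert a S - {a} = S" using insert(2) by auto
    moreover have "(\<Sum>i\<in>S. pd k (u i) x * (\<Prod>j\<in>insert a S-{i}. u j x)) = u a x * (\<Sum>i\<in>S. pd k (u i) x * (\<Prod>j\<in>S-{i}. u j x))"
      unfolding sum_distrib_left
    proof (rule sum.cong[OF refl])
      fix i assume "i \<in> S"
      then have "(\<Prod>j\<in>insert a S-{i}. u j x) = u a x * (\<Prod>j\<in>S-{i}. u j x)"
        using insert(1,2) d[of i] by (simp add: prod.insert)
      then show "pd k (u i) x * (\<Prod>j\<in>insert a S-{i}. u j x) = u a x * (pd k (u i) x * (\<Prod>j\<in>S-{i}. u j x))"
        by simp
    qed
    ultimately show ?thesis using insert(1,2) by (simp add: sum.insert)
  qed
  show ?case unfolding e r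
    using p IH by (simp add: pdiff_mult pd_mult)
qed

lemma pdiff_prod: "finite S \<Longrightarrow> (\<And>i. i \<in> S \<Longrightarrow> pdiff k (u i) x) \<Longrightarrow> pdiff k (\<lambda>y. \<Prod>i\<in>S. u i y) x"
  and pd_prod: "finite S \<Longrightarrow> (\<And>i. i \<in> S \<Longrightarrow> pdiff k (u i) x) \<Longrightarrow>
     pd k (\<lambda>y. \<Prod>i\<in>S. u i y) x = (\<Sum>i\<in>S. pd k (u i) x * (\<Prod>j\<in>S-{i}. u j x))"
  using pd_prod_aux by blast+

lemma pds_snoc: "pds (ks @ [k]) g = pds ks (pd k g)"
  by (induction ks) auto

lemma Ck_0: "Ck 0 g \<longleftrightarrow> continuous_on UNIV g"
  unfolding Ck_def by auto

lemma Ck_Suc: "Ck (Suc r) g \<longleftrightarrow> continuous_on UNIV g \<and> (\<forall>i x. pdiff i g x) \<and> (\<forall>k. Ck r (pd k g))"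
proof
  assume A: "Ck (Suc r) g"
  have D: "\<forall>ks::'a list. length ks < Suc r \<longrightarrow> (\<forall>i x. (\<lambda>h. pds ks g (x + h *\<^sub>R axis i 1)) differentiable (at 0))"
    and C: "\<forall>ks::'a list. length ks \<le> Suc r \<longrightarrow> continuous_on UNIV (pds ks g)"
    using A unfolding Ck_def by blast+
  have 1: "continuous_on UNIV g" using C[rule_format, of "[]"] by simp
  have 2: "\<forall>i x. pdiff i g x" using D[rule_format, of "[]"] by (simp add: pdiff_def)
  have 3: "Ck r (pd k g)" for k
    unfolding Ck_def
  proof (intro conjI allI impI)
    fix ks :: "'a list" and i x assume "length ks < r"
    then show "(\<lambda>h. pds ks (pd k g) (x + h *\<^sub>R axis i 1)) differentiable at 0"
      using D[rule_format, of "ks @ [k]"] by (simp add: pds_snoc)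
  next
    fix ks :: "'a list" assume "length ks \<le> r"
    then show "continuous_on UNIV (pds ks (pd k g))"
      using C[rule_format, of "ks @ [k]"] by (simp add: pds_snoc)
  qed
  show "continuous_on UNIV g \<and> (\<forall>i x. pdiff i g x) \<and> (\<forall>k. Ck r (pd k g))" using 1 2 3 by blast
next
  assume A: "continuous_on UNIV g \<and> (\<forall>i x. pdiff i g x) \<and> (\<forall>k. Ck r (pd k g))"
  show "Ck (Suc r) g" unfolding Ck_def
  proof (intro conjI allI impI)
    fix ks :: "'a list" and i x assume "length ks < Suc r"
    then show "(\<lambda>h. pds ks g (x + h *\<^sub>R axis i 1)) differentiable at 0"
    proof (cases ks rule: rev_exhaust)
      case Nil then show ?thesis using A by (simp add: pdiff_def)
    next
      case (snoc ys y)
      then show ?thesis using A \<open>length ks < Suc r\<close> unfolding Ck_def by (simp add: pds_snoc)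
    qed
  next
    fix ks :: "'a list" assume "length ks \<le> Suc r"
    then show "continuous_on UNIV (pds ks g)"
    proof (cases ks rule: rev_exhaust)
      case Nil then show ?thesis using A by simp
    next
      case (snoc ys y)
      then show ?thesis using A \<open>length ks \<le> Suc r\<close> unfolding Ck_def by (simp add: pds_snoc)
    qed
  qed
qed

lemma Ck_mono: "Ck r g \<Longrightarrow> r' \<le> r \<Longrightarrow> Ck r' g"
  unfolding Ck_def by auto

lemma Ck_pdiff: "Ck (Suc r) g \<Longrightarrow> pdiff i g x"
  by (simp add: Ck_Suc)

lemma Ck_pd: "Ck (Suc r) g \<Longrightarrow> Ck r (pd k g)"
  by (simp add: Ck_Suc)

lemma Ck_pds: "length ks \<le> r \<Longrightarrow> Ck r g \<Longrightarrow> Ck (r - length ks) (pds ks g)"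
proof (induction ks)
  case Nil then show ?case by simp
next
  case (Cons k ks)
  then have "Ck (Suc (r - length (k#ks))) (pds ks g)" by (simp add: Suc_diff_Suc)
  then show ?case by (simp add: Ck_pd)
qed

lemma Ck_add: "Ck r u \<Longrightarrow> Ck r v \<Longrightarrow> Ck r (\<lambda>x. u x + v x)"
proof (induction r arbitrary: u v)
  case 0 then show ?case by (simp add: Ck_0 continuous_on_add)
next
  case (Suc r)
  have e: "pd k (\<lambda>x. u x + v x) = (\<lambda>x. pd k u x + pd k v x)" for k
    using Suc.prems by (auto simp: Ck_Suc pd_add)
  show ?case using Suc by (auto simp: Ck_Suc continuous_on_add pdiff_add e)
qed

lemma Ck_const: "Ck r (\<lambda>x. c)"
proof (induction r arbitrary: c)
  case 0 then show ?case by (simp add: Ck_0)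
next
  case (Suc r)
  have e: "pd k (\<lambda>x. c) = (\<lambda>x. 0)" for k by (auto simp: pd_const)
  show ?case using Suc by (auto simp: Ck_Suc pdiff_const e)
qed

lemma Ck_mult: "Ck r u \<Longrightarrow> Ck r v \<Longrightarrow> Ck r (\<lambda>x. u x * v x)"
proof (induction r arbitrary: u v)
  case 0 then show ?case by (simp add: Ck_0 continuous_on_mult)
next
  case (Suc r)
  have U: "continuous_on UNIV u" "\<And>i x. pdiff i u x" "\<And>k. Ck r (pd k u)" using Suc.prems(1) unfolding Ck_Suc by auto
  have V: "continuous_on UNIV v" "\<And>i x. pdiff i v x" "\<And>k. Ck r (pd k v)" using Suc.prems(2) unfolding Ck_Suc by auto
  have e: "pd k (\<lambda>x. u x * v x) = (\<lambda>x. pd k u x * v x + u x * pd k v x)" for k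
    using U V by (auto simp: pd_mult)
  have m: "Ck r u" "Ck r v" using Suc.prems by (auto intro: Ck_mono[of "Suc r"])
  have "Ck r (pd k (\<lambda>x. u x * v x))" for k
    unfolding e by (rule Ck_add; rule Suc.IH; simp add: U V m)
  then show ?case unfolding Ck_Suc using U V by (auto intro: continuous_on_mult pdiff_mult)
qed

lemma Ck_sum: "finite S \<Longrightarrow> (\<And>i. i \<in> S \<Longrightarrow> Ck r (u i)) \<Longrightarrow> Ck r (\<lambda>x. \<Sum>i\<in>S. u i x)"
  by (induction S rule: finite_induct) (auto simp: Ck_const intro!: Ck_add)

lemma Ck_prod: "finite S \<Longrightarrow> (\<And>i. i \<in> S \<Longrightarrow> Ck r (u i)) \<Longrightarrow> Ck r (\<lambda>x. \<Prod>i\<in>S. u i x)"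
  by (induction S rule: finite_induct) (auto simp: Ck_const intro!: Ck_mult)

lemma finite_lists_eq: "finite {Js::'d::finite list. length Js = n}"
  using finite_lists_length_eq[of "UNIV::'d set" n] by simp

lemma dapply_eq: "dapply h vs = (\<lambda>x. \<Sum>Js \<in> {Js. length Js = length vs}. pds Js h x * (\<Prod>i<length vs. (vs ! i) x $ (Js ! i)))"
  by (intro ext) (simp only: dapply_def)

lemma Ck_dapply: "Ck (r + length vs) h \<Longrightarrow> (\<And>v J. v \<in> set vs \<Longrightarrow> Ck r (\<lambda>x. v x $ J)) \<Longrightarrow> Ck r (dapply h vs)"
  unfolding dapply_eq
proof (rule Ck_sum[OF finite_lists_eq])
  fix Js :: "'a list" assume h: "Ck (r + length vs) h" and v: "\<And>v J. v \<in> set vs \<Longrightarrow> Ck r (\<lambda>x. v x $ J)"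
    and Js: "Js \<in> {Js. length Js = length vs}"
  have 1: "Ck r (pds Js h)" using Ck_pds[of Js "r + length vs" h] h Js by simp
  have 2: "Ck r (\<lambda>x. \<Prod>i<length vs. (vs ! i) x $ (Js ! i))"
    by (rule Ck_prod) (auto intro!: v)
  show "Ck r (\<lambda>x. pds Js h x * (\<Prod>i<length vs. (vs ! i) x $ (Js ! i)))"
    by (rule Ck_mult[OF 1 2])
qed



lemma line_DERIV:
  assumes "pdiff k u (y + t *\<^sub>R axis k 1)"
  shows "((\<lambda>s. u (y + s *\<^sub>R axis k 1)) has_real_derivative pd k u (y + t *\<^sub>R axis k 1)) (at t)"
proof -
  let ?z = "y + t *\<^sub>R axis k 1"
  have "((\<lambda>h. u (?z + h *\<^sub>R axis k 1)) has_real_derivative pd k u ?z) (at (t + - t))"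
    using pd_DERIV[OF assms] by simp
  then have "((\<lambda>s. u (?z + (s + - t) *\<^sub>R axis k 1)) has_real_derivative pd k u ?z) (at t)"
    by (rule DERIV_shift[THEN iffD1])
  moreover have "(\<lambda>s. u (?z + (s + - t) *\<^sub>R axis k 1)) = (\<lambda>s. u (y + s *\<^sub>R axis k 1))"
    by (rule ext) (simp add: algebra_simps)
  ultimately show ?thesis by simp
qed

lemma schwarz_aux:
  fixes u :: "real^'d::finite \<Rightarrow> real"
  assumes pk: "\<And>z. pdiff k u z" and plk: "\<And>z. pdiff l (pd k u) z" and s: "s > 0"
  shows "\<exists>\<sigma> \<tau>. 0 < \<sigma> \<and> \<sigma> < s \<and> 0 < \<tau> \<and> \<tau> < s \<and>
    u (x + s *\<^sub>R axis k 1 + s *\<^sub>R axis l 1) - u (x + s *\<^sub>R axis k 1) - u (x + s *\<^sub>R axis l 1) + u x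
      = s * s * pd l (pd k u) (x + \<sigma> *\<^sub>R axis k 1 + \<tau> *\<^sub>R axis l 1)"
proof -
  define ek where "ek = (axis k 1 :: real^'d)"
  define el where "el = (axis l 1 :: real^'d)"
  define \<phi> where "\<phi> \<sigma> = u (x + s *\<^sub>R el + \<sigma> *\<^sub>R ek) - u (x + \<sigma> *\<^sub>R ek)" for \<sigma>
  have D1: "DERIV \<phi> \<sigma> :> pd k u (x + s *\<^sub>R el + \<sigma> *\<^sub>R ek) - pd k u (x + \<sigma> *\<^sub>R ek)" for \<sigma>
    unfolding \<phi>_def ek_def by (intro DERIV_diff line_DERIV pk)
  obtain \<sigma> where \<sigma>: "0 < \<sigma>" "\<sigma> < s"
    "\<phi> s - \<phi> 0 = (s - 0) * (pd k u (x + s *\<^sub>R el + \<sigma> *\<^sub>R ek) - pd k u (x + \<sigma> *\<^sub>R ek))"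
    using MVT2[OF s, of \<phi> "\<lambda>\<sigma>. pd k u (x + s *\<^sub>R el + \<sigma> *\<^sub>R ek) - pd k u (x + \<sigma> *\<^sub>R ek)"] D1 by blast
  define \<psi> where "\<psi> \<tau> = pd k u (x + \<sigma> *\<^sub>R ek + \<tau> *\<^sub>R el)" for \<tau>
  have D2: "DERIV \<psi> \<tau> :> pd l (pd k u) (x + \<sigma> *\<^sub>R ek + \<tau> *\<^sub>R el)" for \<tau>
    unfolding \<psi>_def el_def by (intro line_DERIV plk)
  obtain \<tau> where \<tau>: "0 < \<tau>" "\<tau> < s"
    "\<psi> s - \<psi> 0 = (s - 0) * pd l (pd k u) (x + \<sigma> *\<^sub>R ek + \<tau> *\<^sub>R el)"
    using MVT2[OF s, of \<psi> "\<lambda>\<tau>. pd l (pd k u) (x + \<sigma> *\<^sub>R ek + \<tau> *\<^sub>R el)"] D2 by blast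
  have "\<psi> s = pd k u (x + s *\<^sub>R el + \<sigma> *\<^sub>R ek)" "\<psi> 0 = pd k u (x + \<sigma> *\<^sub>R ek)"
    unfolding \<psi>_def by (simp_all add: ac_simps)
  then have 1: "\<phi> s - \<phi> 0 = s * s * pd l (pd k u) (x + \<sigma> *\<^sub>R ek + \<tau> *\<^sub>R el)"
    using \<sigma>(3) \<tau>(3) by simp
  have 2: "\<phi> s - \<phi> 0 = u (x + s *\<^sub>R ek + s *\<^sub>R el) - u (x + s *\<^sub>R ek) - u (x + s *\<^sub>R el) + u x"
    unfolding \<phi>_def by (simp add: ac_simps)
  show ?thesis using 1 2 \<sigma>(1,2) \<tau>(1,2) unfolding ek_def el_def by metis
qed

lemma schwarz:
  fixes u :: "real^'d::finite \<Rightarrow> real"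
  assumes "Ck 2 u"
  shows "pd k (pd l u) x = pd l (pd k u) x"
proof (rule ccontr)
  assume ne: "pd k (pd l u) x \<noteq> pd l (pd k u) x"
  let ?A = "pd l (pd k u)" and ?B = "pd k (pd l u)"
  have C2: "Ck (Suc (Suc 0)) u" using assms by (simp add: numeral_2_eq_2)
  have pu: "\<And>i z. pdiff i u z" using C2 by (simp add: Ck_Suc)
  have pk: "\<And>i z. pdiff i (pd k u) z" "\<And>i z. pdiff i (pd l u) z" using C2 by (simp_all add: Ck_Suc)
  have cA: "continuous_on UNIV ?A" and cB: "continuous_on UNIV ?B" using C2 by (simp_all add: Ck_Suc Ck_0)
  define e where "e = \<bar>?A x - ?B x\<bar> / 2"
  have e: "e > 0" using ne unfolding e_def by auto
  obtain d1 where d1: "d1 > 0" "\<And>y. dist y x < d1 \<Longrightarrow> dist (?A y) (?A x) < e"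
    using cA e unfolding continuous_on_iff by blast
  obtain d2 where d2: "d2 > 0" "\<And>y. dist y x < d2 \<Longrightarrow> dist (?B y) (?B x) < e"
    using cB e unfolding continuous_on_iff by blast
  define s where "s = min d1 d2 / 3"
  have s: "s > 0" using d1 d2 unfolding s_def by auto
  obtain \<sigma> \<tau> where st: "0 < \<sigma>" "\<sigma> < s" "0 < \<tau>" "\<tau> < s"
    "u (x + s *\<^sub>R axis k 1 + s *\<^sub>R axis l 1) - u (x + s *\<^sub>R axis k 1) - u (x + s *\<^sub>R axis l 1) + u x
      = s * s * ?A (x + \<sigma> *\<^sub>R axis k 1 + \<tau> *\<^sub>R axis l 1)"
    using schwarz_aux[OF pu pk(1) s] by blast
  obtain \<sigma>' \<tau>' where st': "0 < \<sigma>'" "\<sigma>' < s" "0 < \<tau>'" "\<tau>' < s"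
    "u (x + s *\<^sub>R axis l 1 + s *\<^sub>R axis k 1) - u (x + s *\<^sub>R axis l 1) - u (x + s *\<^sub>R axis k 1) + u x
      = s * s * ?B (x + \<sigma>' *\<^sub>R axis l 1 + \<tau>' *\<^sub>R axis k 1)"
    using schwarz_aux[OF pu pk(2) s] by blast
  have "s * s * ?A (x + \<sigma> *\<^sub>R axis k 1 + \<tau> *\<^sub>R axis l 1) = s * s * ?B (x + \<sigma>' *\<^sub>R axis l 1 + \<tau>' *\<^sub>R axis k 1)"
  proof -
    have eqx: "x + s *\<^sub>R axis l 1 + s *\<^sub>R axis k 1 = x + s *\<^sub>R axis k 1 + s *\<^sub>R axis l 1"
      by (simp add: ac_simps)
    show ?thesis using st(5) st'(5) unfolding eqx by linarith
  qed
  then have eq: "?A (x + \<sigma> *\<^sub>R axis k 1 + \<tau> *\<^sub>R axis l 1) = ?B (x + \<sigma>' *\<^sub>R axis l 1 + \<tau>' *\<^sub>R axis k 1)"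
    using s by simp
  have nb: "dist (x + a *\<^sub>R axis i 1 + b *\<^sub>R axis j 1) x < 2 * s"
    if "0 < a" "a < s" "0 < b" "b < s" for a b and i j :: 'd
  proof -
    have "dist (x + a *\<^sub>R axis i 1 + b *\<^sub>R axis j 1) x = norm (a *\<^sub>R axis i (1::real) + b *\<^sub>R axis j 1)"
      by (simp add: dist_norm)
    also have "\<dots> \<le> norm (a *\<^sub>R axis i (1::real)) + norm (b *\<^sub>R axis j (1::real))" by (rule norm_triangle_ineq)
    also have "\<dots> = a + b" using that by simp
    finally show ?thesis using that by simp
  qed
  have "2 * s < d1" "2 * s < d2" using d1 d2 unfolding s_def by auto
  then have "dist (?A (x + \<sigma> *\<^sub>R axis k 1 + \<tau> *\<^sub>R axis l 1)) (?A x) < e"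
    "dist (?B (x + \<sigma>' *\<^sub>R axis l 1 + \<tau>' *\<^sub>R axis k 1)) (?B x) < e"
    using d1(2) d2(2) nb[OF st(1-4)] nb[OF st'(1-4)] by (meson less_trans)+
  then have "\<bar>?A x - ?B x\<bar> < 2 * e" using eq by (simp add: dist_real_def)
  then show False unfolding e_def by simp
qed

lemma pds_swap: "Ck (Suc (length Js)) h \<Longrightarrow> pds (k # Js) h = pds (Js @ [k]) h"
proof (induction Js)
  case Nil then show ?case by simp
next
  case (Cons j Js)
  have C: "Ck 2 (pds Js h)" using Ck_pds[of Js "Suc (Suc (length Js))" h] Cons.prems by simp
  have "Ck (Suc (length Js)) h" using Cons.prems by (rule Ck_mono) simp
  then have IH: "pds (k # Js) h = pds (Js @ [k]) h"
    using Cons.IH by blast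
  have "pds (k # j # Js) h = pd k (pd j (pds Js h))" by simp
  also have "\<dots> = pd j (pd k (pds Js h))" using schwarz[OF C] by (rule ext)
  also have "\<dots> = pd j (pds (k # Js) h)" by simp
  also have "\<dots> = pds ((j # Js) @ [k]) h" using IH by simp
  finally show ?case .
qed



definition Ds :: "(real^'d::finite \<Rightarrow> real^'d) \<Rightarrow> (real^'d \<Rightarrow> real) \<Rightarrow> real^'d \<Rightarrow> real" where
  "Ds g u x = (\<Sum>k\<in>UNIV. g x $ k * pd k u x)"

definition Dv :: "(real^'d::finite \<Rightarrow> real^'d) \<Rightarrow> (real^'d \<Rightarrow> real^'d) \<Rightarrow> real^'d \<Rightarrow> real^'d" where
  "Dv g F x = (\<chi> I. Ds g (\<lambda>y. F y $ I) x)"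

lemma Ck_pds_pdiff: "Ck r h \<Longrightarrow> length ks < r \<Longrightarrow> pdiff i (pds ks h) x"
  unfolding Ck_def pdiff_def by blast

lemma prod_update:
  assumes "q < length vs"
  shows "(\<Prod>i<length vs. ((vs[q := W]) ! i) x $ (Js ! i)) = W x $ (Js ! q) * (\<Prod>i\<in>{..<length vs}-{q}. (vs ! i) x $ (Js ! i))"
proof -
  have "(\<Prod>i<length vs. ((vs[q := W]) ! i) x $ (Js ! i)) = ((vs[q := W]) ! q) x $ (Js ! q) * (\<Prod>i\<in>{..<length vs}-{q}. ((vs[q := W]) ! i) x $ (Js ! i))"
    using assms by (subst prod.remove[of _ q]) auto
  also have "(\<Prod>i\<in>{..<length vs}-{q}. ((vs[q := W]) ! i) x $ (Js ! i)) = (\<Prod>i\<in>{..<length vs}-{q}. (vs ! i) x $ (Js ! i))"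
    by (rule prod.cong) auto
  finally show ?thesis using assms by simp
qed

lemma dapply_slot_sum:
  assumes "q < length vs" "finite P"
  shows "dapply h (vs[q := (\<lambda>x. \<Sum>p\<in>P. w p x)]) x = (\<Sum>p\<in>P. dapply h (vs[q := w p]) x)"
proof -
  have "dapply h (vs[q := (\<lambda>x. \<Sum>p\<in>P. w p x)]) x =
     (\<Sum>Js \<in> {Js. length Js = length vs}. pds Js h x * ((\<Sum>p\<in>P. w p x $ (Js ! q)) * (\<Prod>i\<in>{..<length vs}-{q}. (vs ! i) x $ (Js ! i))))"
    unfolding dapply_def using assms(1) by (simp add: prod_update sum_component)
  also have "\<dots> = (\<Sum>Js \<in> {Js. length Js = length vs}. \<Sum>p\<in>P. pds Js h x * (w p x $ (Js ! q) * (\<Prod>i\<in>{..<length vs}-{q}. (vs ! i) x $ (Js ! i))))"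
    by (simp add: sum_distrib_left sum_distrib_right)
  also have "\<dots> = (\<Sum>p\<in>P. \<Sum>Js \<in> {Js. length Js = length vs}. pds Js h x * (w p x $ (Js ! q) * (\<Prod>i\<in>{..<length vs}-{q}. (vs ! i) x $ (Js ! i))))"
    by (rule sum.swap)
  also have "\<dots> = (\<Sum>p\<in>P. dapply h (vs[q := w p]) x)"
    unfolding dapply_def using assms(1) by (simp add: prod_update)
  finally show ?thesis .
qed

lemma dapply_Nil: "dapply h [] x = h x"
proof -
  have "{Js::'a list. length Js = 0} = {[]}" by auto
  then show ?thesis unfolding dapply_def by simp
qed

lemma lists_Suc_bij: "bij_betw (\<lambda>(Js, k). Js @ [k]) ({Js::'a list. length Js = n} \<times> UNIV) {Js. length Js = Suc n}"
proof (rule bij_betwI[where g = "\<lambda>Js. (butlast Js, last Js)"])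
  show "(\<lambda>(Js, k). Js @ [k]) \<in> {Js::'a list. length Js = n} \<times> UNIV \<rightarrow> {Js. length Js = Suc n}" by auto
  show "(\<lambda>Js. (butlast Js, last Js)) \<in> {Js::'a list. length Js = Suc n} \<rightarrow> {Js. length Js = n} \<times> UNIV" by auto
  show "\<And>x. x \<in> {Js::'a list. length Js = n} \<times> UNIV \<Longrightarrow> (butlast (case x of (Js, k) \<Rightarrow> Js @ [k]), last (case x of (Js, k) \<Rightarrow> Js @ [k])) = x"
    by auto
  show "\<And>y. y \<in> {Js::'a list. length Js = Suc n} \<Longrightarrow> (case (butlast y, last y) of (Js, k) \<Rightarrow> Js @ [k]) = y"
    apply clarsimp
    subgoal for y by (cases y rule: rev_exhaust) auto
    done
qed

lemma dapply_Ds: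
  fixes h :: "real^'d::finite \<Rightarrow> real"
  assumes h: "Ck (Suc (length vs)) h"
    and v: "\<And>v J z k. v \<in> set vs \<Longrightarrow> pdiff k (\<lambda>y. v y $ J) z"
  shows "Ds g (dapply h vs) x = dapply h (vs @ [g]) x + (\<Sum>q<length vs. dapply h (vs[q := Dv g (vs!q)]) x)"
proof -
  define n where "n = length vs"
  define S where "S = {Js::'d list. length Js = n}"
  define P where "P Js y = (\<Prod>i<n. (vs ! i) y $ (Js ! i))" for Js y
  define R where "R Js q y = (\<Prod>i\<in>{..<n}-{q}. (vs ! i) y $ (Js ! i))" for Js q y
  have fS: "finite S" unfolding S_def by (rule finite_lists_eq)
  have dap: "dapply h vs = (\<lambda>y. \<Sum>Js\<in>S. pds Js h y * P Js y)"
    unfolding dapply_eq S_def P_def n_def by simp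
  have pv: "\<And>i J z k. i < n \<Longrightarrow> pdiff k (\<lambda>y. (vs ! i) y $ J) z" using v unfolding n_def by auto
  have pP: "pdiff k (P Js) z" for Js k z
    unfolding P_def by (rule pdiff_prod) (auto intro: pv)
  have dP: "pd k (P Js) x = (\<Sum>q<n. pd k (\<lambda>y. (vs ! q) y $ (Js ! q)) x * R Js q x)" for Js k
    unfolding P_def R_def by (rule pd_prod) (auto intro: pv)
  have pH: "pdiff k (pds Js h) z" if "Js \<in> S" for Js k z
    using that h unfolding S_def n_def by (auto intro: Ck_pds_pdiff)
  have swap: "pd k (pds Js h) = pds (Js @ [k]) h" if "Js \<in> S" for Js k
    using pds_swap[of Js h k] that h unfolding S_def n_def by simp
  have pdx: "pd k (dapply h vs) x = (\<Sum>Js\<in>S. pds (Js @ [k]) h x * P Js x + pds Js h x * (\<Sum>q<n. pd k (\<lambda>y. (vs ! q) y $ (Js ! q)) x * R Js q x))" for k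
  proof -
    have "pd k (dapply h vs) x = (\<Sum>Js\<in>S. pd k (\<lambda>y. pds Js h y * P Js y) x)"
      unfolding dap by (rule pd_sum[OF fS]) (intro pdiff_mult pH pP; simp)
    also have "\<dots> = (\<Sum>Js\<in>S. pds (Js @ [k]) h x * P Js x + pds Js h x * (\<Sum>q<n. pd k (\<lambda>y. (vs ! q) y $ (Js ! q)) x * R Js q x))"
      by (rule sum.cong[OF refl]) (simp add: pd_mult pH pP swap dP)
    finally show ?thesis .
  qed
  define A where "A = (\<Sum>k\<in>UNIV. \<Sum>Js\<in>S. g x $ k * (pds (Js @ [k]) h x * P Js x))"
  define B where "B = (\<Sum>k\<in>UNIV. \<Sum>Js\<in>S. \<Sum>q<n. g x $ k * (pds Js h x * (pd k (\<lambda>y. (vs ! q) y $ (Js ! q)) x * R Js q x)))"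
  have "Ds g (dapply h vs) x = A + B"
    unfolding Ds_def pdx A_def B_def
    by (simp add: sum_distrib_left ring_distribs sum.distrib)
  moreover have "A = dapply h (vs @ [g]) x"
  proof -
    have "dapply h (vs @ [g]) x = (\<Sum>Js'\<in>{Js. length Js = Suc n}. pds Js' h x * (\<Prod>i<Suc n. ((vs @ [g]) ! i) x $ (Js' ! i)))"
      unfolding dapply_def n_def by simp
    also have "\<dots> = (\<Sum>(Js, k)\<in>S \<times> UNIV. pds (Js @ [k]) h x * (\<Prod>i<Suc n. ((vs @ [g]) ! i) x $ ((Js @ [k]) ! i)))"
      using sum.reindex_bij_betw[OF lists_Suc_bij[of n], symmetric] unfolding S_def
      by (simp add: case_prod_unfold)
    also have "\<dots> = (\<Sum>(Js, k)\<in>S \<times> UNIV. g x $ k * (pds (Js @ [k]) h x * P Js x))"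
    proof (rule sum.cong[OF refl], clarify)
      fix Js k assume "Js \<in> S"
      then have l: "length Js = n" unfolding S_def by simp
      have "(\<Prod>i<Suc n. ((vs @ [g]) ! i) x $ ((Js @ [k]) ! i)) = P Js x * g x $ k"
        unfolding P_def using l by (simp add: prod.lessThan_Suc nth_append n_def)
      then show "pds (Js @ [k]) h x * (\<Prod>i<Suc n. ((vs @ [g]) ! i) x $ ((Js @ [k]) ! i)) = g x $ k * (pds (Js @ [k]) h x * P Js x)"
        by simp
    qed
    also have "\<dots> = (\<Sum>Js\<in>S. \<Sum>k\<in>UNIV. g x $ k * (pds (Js @ [k]) h x * P Js x))"
      by (rule sum.cartesian_product[symmetric])
    also have "\<dots> = A" unfolding A_def by (rule sum.swap)
    finally show ?thesis by simp
  qed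
  moreover have "B = (\<Sum>q<length vs. dapply h (vs[q := Dv g (vs!q)]) x)"
  proof -
    have "(\<Sum>q<length vs. dapply h (vs[q := Dv g (vs!q)]) x)
       = (\<Sum>q<n. \<Sum>Js\<in>S. pds Js h x * (Dv g (vs!q) x $ (Js ! q) * R Js q x))"
      unfolding dapply_def S_def R_def n_def
      apply (rule sum.cong[OF refl])
      subgoal for q
        unfolding length_list_update
        apply (rule sum.cong[OF refl])
        subgoal for Js using prod_update[of q vs "Dv g (vs!q)" x Js] by simp
        done
      done
    also have "\<dots> = (\<Sum>q<n. \<Sum>Js\<in>S. \<Sum>k\<in>UNIV. g x $ k * (pds Js h x * (pd k (\<lambda>y. (vs ! q) y $ (Js ! q)) x * R Js q x)))"
      by (intro sum.cong refl) (simp add: Dv_def Ds_def sum_distrib_left sum_distrib_right mult_ac)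
    also have "\<dots> = (\<Sum>q<n. \<Sum>k\<in>UNIV. \<Sum>Js\<in>S. g x $ k * (pds Js h x * (pd k (\<lambda>y. (vs ! q) y $ (Js ! q)) x * R Js q x)))"
      by (rule sum.cong[OF refl], rule sum.swap)
    also have "\<dots> = (\<Sum>k\<in>UNIV. \<Sum>q<n. \<Sum>Js\<in>S. g x $ k * (pds Js h x * (pd k (\<lambda>y. (vs ! q) y $ (Js ! q)) x * R Js q x)))"
      by (rule sum.swap)
    also have "\<dots> = B" unfolding B_def by (rule sum.cong[OF refl], rule sum.swap)
    finally show ?thesis by simp
  qed
  ultimately show ?thesis by simp
qed



lemma children_mem: "c \<in> set (children t i) \<longleftrightarrow> i < c \<and> c \<le> length t \<and> fst (t ! (c - 1)) = i"
  unfolding children_def by auto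

lemma children_distinct: "distinct (children t i)"
  unfolding children_def by simp

lemma children_length: "length (children t i) \<le> length t - i"
  unfolding children_def by (rule order_trans[OF length_filter_le]) (simp; linarith)

lemma children_append:
  assumes "i \<le> length t"
  shows "children (t @ [(p, col)]) i = children t i @ (if p = i then [Suc (length t)] else [])"
proof -
  have u: "[i + 1 ..< length (t @ [(p, col)]) + 1] = [i + 1 ..< length t + 1] @ [Suc (length t)]"
    using assms by simp
  have f: "filter (\<lambda>c. fst ((t @ [(p, col)]) ! (c - 1)) = i) [i + 1 ..< length t + 1]
        = filter (\<lambda>c. fst (t ! (c - 1)) = i) [i + 1 ..< length t + 1]"
    by (rule filter_cong) (auto simp: nth_append)
  show ?thesis unfolding children_def u filter_append f by (simp add: nth_append)
qed

lemma children_last: "children t (length t) = []"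
  unfolding children_def by simp

lemma Fnode_fuel:
  assumes "1 \<le> i" "i \<le> length t" "length t + 1 - i \<le> n" "length t + 1 - i \<le> m"
  shows "Fnode n a b js t i = Fnode m a b js t i"
  using assms
proof (induction n arbitrary: m i)
  case 0 then show ?case by simp
next
  case (Suc n)
  then obtain m' where m: "m = Suc m'" by (cases m) auto
  have eq: "map (Fnode n a b js t) (children t i) = map (Fnode m' a b js t) (children t i)"
  proof (rule map_cong[OF refl])
    fix c assume "c \<in> set (children t i)"
    then have "i < c" "c \<le> length t" by (auto simp: children_mem)
    then show "Fnode n a b js t c = Fnode m' a b js t c"
      using Suc.prems m by (intro Suc.IH) auto
  qed
  show ?case unfolding m Fnode.simps(2) eq ..
qed

definition FF where "FF a b js t i = Fnode (length t) a b js t i"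

lemma FF_unfold:
  assumes "1 \<le> i" "i \<le> length t"
  shows "FF a b js t i = (\<lambda>x. \<chi> I. dapply (node_fun a b js (snd (t ! (i - 1))) I) (map (FF a b js t) (children t i)) x)"
proof -
  obtain L where L: "length t = Suc L" using assms by (cases "length t") auto
  have eq: "map (Fnode L a b js t) (children t i) = map (Fnode (Suc L) a b js t) (children t i)"
  proof (rule map_cong[OF refl])
    fix c assume "c \<in> set (children t i)"
    then have "i < c" "c \<le> length t" by (auto simp: children_mem)
    then show "Fnode L a b js t c = Fnode (Suc L) a b js t c"
      using assms L by (intro Fnode_fuel) auto
  qed
  show ?thesis unfolding FF_def L Fnode.simps(2) eq ..
qed

lemma elemF_FF: "elemF f a b js t = dapply f (map (FF a b js t) (children t 1))"
  unfolding elemF_def FF_def by (rule ext) simp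

lemma FF_leaf: "FF a b js (t @ [(p, col)]) (Suc (length t)) = (\<lambda>x. \<chi> I. node_fun a b js col I x)"
proof -
  have "children (t @ [(p, col)]) (Suc (length t)) = []"
    using children_last[of "t @ [(p, col)]"] by simp
  then show ?thesis
    by (subst FF_unfold) (auto simp: dapply_Nil)
qed

inductive desc :: "ltree \<Rightarrow> nat \<Rightarrow> nat \<Rightarrow> bool" for t where
  desc_refl: "desc t i i"
| desc_step: "c \<in> set (children t i) \<Longrightarrow> desc t c p \<Longrightarrow> desc t i p"

lemma desc_le: "desc t i p \<Longrightarrow> p = i \<or> (i < p \<and> p \<le> length t)"
  by (induction rule: desc.induct) (auto simp: children_mem)

lemma desc_iff: "desc t i p \<longleftrightarrow> p = i \<or> (\<exists>c\<in>set (children t i). desc t c p)"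
  by (auto intro: desc.intros elim: desc.cases)

lemma desc_trans: "desc t i c \<Longrightarrow> desc t c p \<Longrightarrow> desc t i p"
  by (induction rule: desc.induct) (auto intro: desc.intros)

lemma desc_parent: "desc t c p \<Longrightarrow> p \<noteq> c \<Longrightarrow> \<exists>q. p \<in> set (children t q) \<and> desc t c q"
proof (induction rule: desc.induct)
  case (desc_refl i) then show ?case by simp
next
  case (desc_step c' i p)
  show ?case
  proof (cases "p = c'")
    case True then show ?thesis using desc_step by (auto intro: desc.intros)
  next
    case False
    then obtain q where "p \<in> set (children t q)" "desc t c' q" using desc_step by auto
    then show ?thesis using desc_step(1) by (auto intro: desc.intros)
  qed
qed

lemma children_parent_unique: "p \<in> set (children t q1) \<Longrightarrow> p \<in> set (children t q2) \<Longrightarrow> q1 = q2"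
  by (auto simp: children_mem)

lemma desc_linear: "desc t c p \<Longrightarrow> desc t c' p \<Longrightarrow> c \<le> c' \<Longrightarrow> desc t c c'"
proof (induction p rule: less_induct)
  case (less p)
  show ?case
  proof (cases "p = c'")
    case True then show ?thesis using less by simp
  next
    case False
    have "p \<noteq> c" using False less.prems desc_le[OF less.prems(2)] by auto
    obtain q where q: "p \<in> set (children t q)" "desc t c q" using desc_parent[OF less.prems(1) \<open>p \<noteq> c\<close>] by blast
    obtain q' where q': "p \<in> set (children t q')" "desc t c' q'" using desc_parent[OF less.prems(2) False] by blast
    have "q = q'" using q q' children_parent_unique by blast
    have "q < p" using q by (auto simp: children_mem)
    then show ?thesis using less.IH[of q] q q' \<open>q = q'\<close> less.prems(3) by blast
  qed
qed

lemma desc_disjoint: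
  assumes "c1 \<in> set (children t i)" "c2 \<in> set (children t i)" "c1 \<noteq> c2" "desc t c1 p" "desc t c2 p"
  shows False
proof -
  have gen: False if h: "c1 \<in> set (children t i)" "c2 \<in> set (children t i)" "c1 < c2" "desc t c1 p" "desc t c2 p" for c1 c2
  proof -
    have "desc t c1 c2" using desc_linear[OF h(4,5)] h(3) by simp
    moreover have "c2 \<noteq> c1" using h(3) by simp
    ultimately obtain q where q: "c2 \<in> set (children t q)" "desc t c1 q" using desc_parent by blast
    have "q = i" using q(1) h(2) children_parent_unique by blast
    then have "desc t c1 i" using q by simp
    then show False using desc_le[of t c1 i] h(1) by (auto simp: children_mem)
  qed
  show False using assms gen[of c1 c2] gen[of c2 c1] by (cases "c1 < c2") auto
qed

lemma finite_desc: "finite {p. desc t i p}"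
proof -
  have "{p. desc t i p} \<subseteq> insert i {..length t}" using desc_le by fastforce
  then show ?thesis by (rule finite_subset) simp
qed

lemma Fnode_unchanged:
  assumes "1 \<le> c" "c \<le> length t" "\<not> desc t c p"
  shows "Fnode n a b js (t @ [(p, col)]) c = Fnode n a b js t c"
  using assms
proof (induction n arbitrary: c)
  case 0 then show ?case by simp
next
  case (Suc n)
  have pc: "p \<noteq> c" using Suc.prems(3) desc_refl by auto
  have ch: "children (t @ [(p, col)]) c = children t c" using children_append[OF Suc.prems(2)] pc by simp
  have "c - 1 < length t" using Suc.prems by simp
  then have nt: "(t @ [(p, col)]) ! (c - 1) = t ! (c - 1)" by (simp add: nth_append)
  have eq: "map (Fnode n a b js (t @ [(p, col)])) (children t c) = map (Fnode n a b js t) (children t c)"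
  proof (rule map_cong[OF refl])
    fix c' assume c': "c' \<in> set (children t c)"
    then have "c < c'" "c' \<le> length t" by (auto simp: children_mem)
    moreover have "\<not> desc t c' p" using c' Suc.prems(3) desc_step by blast
    ultimately show "Fnode n a b js (t @ [(p, col)]) c' = Fnode n a b js t c'"
      using Suc.prems by (intro Suc.IH) auto
  qed
  show ?case unfolding Fnode.simps(2) ch nt eq ..
qed

lemma FF_unchanged:
  assumes "2 \<le> c" "c \<le> length t" "\<not> desc t c p"
  shows "FF a b js (t @ [(p, col)]) c = FF a b js t c"
proof -
  have "FF a b js (t @ [(p, col)]) c = Fnode (length t) a b js (t @ [(p, col)]) c"
    unfolding FF_def using assms by (intro Fnode_fuel) auto
  also have "\<dots> = FF a b js t c" unfolding FF_def using assms by (intro Fnode_unchanged) auto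
  finally show ?thesis .
qed



lemma FF_comp:
  assumes "1 \<le> i" "i \<le> length t"
  shows "(\<lambda>x. FF a b js t i x $ I) = dapply (node_fun a b js (snd (t ! (i - 1))) I) (map (FF a b js t) (children t i))"
  apply (subst FF_unfold[OF assms])
  apply (rule ext)
  apply (simp only: vec_lambda_beta)
  done

lemma SMF:
  assumes NF: "\<forall>col I. Ck R (node_fun a b js col I)" and L: "length t \<le> R" and i: "1 \<le> i" "i \<le> length t"
  shows "Ck (R + i - length t) (\<lambda>x. FF a b js t i x $ I)"
  using i
proof (induction "length t - i" arbitrary: i I rule: less_induct)
  case less
  let ?cs = "children t i"
  show ?case unfolding FF_comp[OF less.prems]
  proof (rule Ck_dapply)
    have lc: "length ?cs \<le> length t - i" by (rule children_length)
    show "Ck (R + i - length t + length (map (FF a b js t) ?cs)) (node_fun a b js (snd (t ! (i - 1))) I)"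
      by (rule Ck_mono[of R]) (use NF L less.prems lc in auto)
  next
    fix v J assume "v \<in> set (map (FF a b js t) ?cs)"
    then obtain c where c: "c \<in> set ?cs" "v = FF a b js t c" by auto
    then have ic: "i < c" "c \<le> length t" by (auto simp: children_mem)
    have "Ck (R + c - length t) (\<lambda>x. FF a b js t c x $ J)"
      using ic less.prems by (intro less.hyps) auto
    then show "Ck (R + i - length t) (\<lambda>x. v x $ J)" using c ic L by (auto elim!: Ck_mono)
  qed
qed

lemma sum_nth_set: "distinct cs \<Longrightarrow> (\<Sum>q<length cs. G (cs ! q)) = (\<Sum>c\<in>set cs. G c)"
proof -
  assume d: "distinct cs"
  have "set cs = (nth cs) ` {..<length cs}" by (auto simp: in_set_conv_nth)
  moreover have "inj_on (nth cs) {..<length cs}" using d by (intro inj_on_nth) auto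
  ultimately show ?thesis by (simp add: sum.reindex)
qed

lemma NODE:
  fixes g :: "real^'d::finite \<Rightarrow> real^'d" and b :: "real^'d \<Rightarrow> real^'m::finite^'d"
  assumes i: "1 \<le> i" "i \<le> length t"
    and h: "Ck (Suc (length (children t i))) h"
    and pv: "\<And>c J z k. c \<in> set (children t i) \<Longrightarrow> pdiff k (\<lambda>y. FF a b js t c y $ J) z"
    and IH: "\<And>c. c \<in> set (children t i) \<Longrightarrow> Dv g (FF a b js t c) = (\<lambda>x. \<Sum>p\<in>{p. desc t c p}. FF a b js (t @ [(p, col)]) c x)"
    and G: "\<And>I. node_fun a b js col I = (\<lambda>y. g y $ I)"
  shows "Ds g (dapply h (map (FF a b js t) (children t i))) x =
     (\<Sum>p\<in>{p. desc t i p}. dapply h (map (FF a b js (t @ [(p, col)])) (children (t @ [(p, col)]) i)) x)"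
proof -
  define cs where "cs = children t i"
  define vs where "vs = map (FF a b js t) cs"
  define T where "T p = t @ [(p, col)]" for p
  define X where "X p = dapply h (map (FF a b js (T p)) (children (T p) i)) x" for p
  define P where "P c = {p. desc t c p}" for c
  have dcs: "distinct cs" unfolding cs_def by (rule children_distinct)
  have cs_gt: "\<And>c. c \<in> set cs \<Longrightarrow> i < c \<and> c \<le> length t" unfolding cs_def by (auto simp: children_mem)
  have B1: "Ds g (dapply h vs) x = dapply h (vs @ [g]) x + (\<Sum>q<length vs. dapply h (vs[q := Dv g (vs!q)]) x)"
    using h pv unfolding vs_def cs_def by (intro dapply_Ds) auto
  have X1: "X i = dapply h (vs @ [g]) x"
  proof -
    have ch: "children (T i) i = cs @ [Suc (length t)]" unfolding T_def cs_def using children_append[OF i(2)] by simp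
    have m1: "map (FF a b js (T i)) cs = map (FF a b js t) cs"
    proof (rule map_cong[OF refl])
      fix c assume c: "c \<in> set cs"
      have "\<not> desc t c i" using cs_gt[OF c] desc_le[of t c i] by auto
      then show "FF a b js (T i) c = FF a b js t c" unfolding T_def using cs_gt[OF c] i by (intro FF_unchanged) auto
    qed
    have lf: "FF a b js (T i) (Suc (length t)) = g" unfolding T_def FF_leaf G by simp
    show ?thesis unfolding X_def ch vs_def by (simp only: map_append list.map m1 lf)
  qed
  have X2: "dapply h (vs[q := Dv g (vs!q)]) x = (\<Sum>p\<in>P (cs ! q). X p)" if q: "q < length cs" for q
  proof -
    define c where "c = cs ! q"
    have c: "c \<in> set cs" unfolding c_def using q by simp
    have "Dv g (vs ! q) = (\<lambda>x. \<Sum>p\<in>P c. FF a b js (T p) c x)"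
      unfolding vs_def c_def P_def T_def using q IH c unfolding c_def cs_def by simp
    then have "dapply h (vs[q := Dv g (vs!q)]) x = (\<Sum>p\<in>P c. dapply h (vs[q := FF a b js (T p) c]) x)"
      using q finite_desc unfolding vs_def P_def by (simp add: dapply_slot_sum)
    also have "\<dots> = (\<Sum>p\<in>P c. X p)"
    proof (rule sum.cong[OF refl])
      fix p assume p: "p \<in> P c"
      then have dp: "desc t c p" unfolding P_def by simp
      have "p \<noteq> i" using desc_le[OF dp] cs_gt[OF c] by auto
      then have ch: "children (T p) i = cs" unfolding T_def cs_def using children_append[OF i(2)] by simp
      have "vs[q := FF a b js (T p) c] = map (FF a b js (T p)) cs"
      proof (rule nth_equalityI)
        show "length (vs[q := FF a b js (T p) c]) = length (map (FF a b js (T p)) cs)" unfolding vs_def by simp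
      next
        fix q' assume q': "q' < length (vs[q := FF a b js (T p) c])"
        then have q'l: "q' < length cs" unfolding vs_def by simp
        show "vs[q := FF a b js (T p) c] ! q' = map (FF a b js (T p)) cs ! q'"
        proof (cases "q' = q")
          case True then show ?thesis using q unfolding vs_def c_def by simp
        next
          case False
          have ne: "cs ! q' \<noteq> c" unfolding c_def using False q q'l dcs by (simp add: nth_eq_iff_index_eq)
          have c': "cs ! q' \<in> set cs" using q'l by simp
          have nd: "\<not> desc t (cs ! q') p"
            using desc_disjoint[of "cs ! q'" t i c p] c' c ne dp unfolding cs_def by blast
          have "FF a b js (T p) (cs ! q') = FF a b js t (cs ! q')"
            unfolding T_def using cs_gt[OF c'] i nd by (intro FF_unchanged) auto
          then show ?thesis using False q'l unfolding vs_def by simp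
        qed
      qed
      then show "dapply h (vs[q := FF a b js (T p) c]) x = X p" unfolding X_def ch by simp
    qed
    finally show ?thesis unfolding c_def .
  qed
  have fP: "\<And>c. finite (P c)" unfolding P_def by (rule finite_desc)
  have disj: "\<forall>c1\<in>set cs. \<forall>c2\<in>set cs. c1 \<noteq> c2 \<longrightarrow> P c1 \<inter> P c2 = {}"
    unfolding P_def cs_def using desc_disjoint by blast
  have Pi: "P i = insert i (\<Union>c\<in>set cs. P c)" unfolding P_def cs_def
    by (auto simp: desc_iff[of t i])
  have ni: "i \<notin> (\<Union>c\<in>set cs. P c)" unfolding P_def using cs_gt desc_le by fastforce
  have "(\<Sum>p\<in>P i. X p) = X i + (\<Sum>c\<in>set cs. \<Sum>p\<in>P c. X p)"
    unfolding Pi using ni fP disj by (simp add: sum.UNION_disjoint)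
  also have "(\<Sum>c\<in>set cs. \<Sum>p\<in>P c. X p) = (\<Sum>q<length cs. \<Sum>p\<in>P (cs ! q). X p)"
    using sum_nth_set[OF dcs, of "\<lambda>c. \<Sum>p\<in>P c. X p"] by simp
  also have "\<dots> = (\<Sum>q<length vs. dapply h (vs[q := Dv g (vs!q)]) x)"
  proof -
    have "length vs = length cs" unfolding vs_def by simp
    then show ?thesis using X2 by (intro sum.cong) auto
  qed
  finally have "(\<Sum>p\<in>P i. X p) = Ds g (dapply h vs) x" using B1 X1 by simp
  then show ?thesis unfolding X_def P_def T_def vs_def cs_def by simp
qed

lemma DERIV_TREE:
  fixes g :: "real^'d::finite \<Rightarrow> real^'d" and b :: "real^'d \<Rightarrow> real^'m::finite^'d"
  assumes NF: "\<forall>col I. Ck R (node_fun a b js col I)" and L: "length t \<le> R"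
    and G: "\<And>I. node_fun a b js col I = (\<lambda>y. g y $ I)"
    and i: "2 \<le> i" "i \<le> length t"
  shows "Dv g (FF a b js t i) = (\<lambda>x. \<Sum>p\<in>{p. desc t i p}. FF a b js (t @ [(p, col)]) i x)"
  using i
proof (induction "length t - i" arbitrary: i rule: less_induct)
  case less
  let ?cs = "children t i"
  have i1: "1 \<le> i" using less.prems by simp
  show ?case
  proof (rule ext, subst vec_eq_iff, rule allI)
    fix x I
    have lcs: "length ?cs \<le> length t - i" by (rule children_length)
    have "Dv g (FF a b js t i) x $ I = Ds g (dapply (node_fun a b js (snd (t ! (i - 1))) I) (map (FF a b js t) ?cs)) x"
      unfolding Dv_def FF_comp[OF i1 less.prems(2), symmetric] by simp
    also have "\<dots> = (\<Sum>p\<in>{p. desc t i p}. dapply (node_fun a b js (snd (t ! (i - 1))) I)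
         (map (FF a b js (t @ [(p, col)])) (children (t @ [(p, col)]) i)) x)"
    proof (rule NODE[OF i1 less.prems(2) _ _ _ G])
      show "Ck (Suc (length ?cs)) (node_fun a b js (snd (t ! (i - 1))) I)"
        by (rule Ck_mono[of R]) (use NF L lcs less.prems in auto)
    next
      fix c J z k assume c: "c \<in> set ?cs"
      then have "i < c" "c \<le> length t" by (auto simp: children_mem)
      then have "Ck (R + c - length t) (\<lambda>x. FF a b js t c x $ J)" by (intro SMF[OF NF L]) auto
      moreover have "Suc 0 \<le> R + c - length t" using \<open>i < c\<close> L by simp
      ultimately show "pdiff k (\<lambda>y. FF a b js t c y $ J) z" by (metis Ck_mono Ck_pdiff)
    next
      fix c assume c: "c \<in> set ?cs"
      then have "i < c" "c \<le> length t" by (auto simp: children_mem)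
      then show "Dv g (FF a b js t c) = (\<lambda>x. \<Sum>p\<in>{p. desc t c p}. FF a b js (t @ [(p, col)]) c x)"
        using less.prems by (intro less.hyps) auto
    qed
    also have "\<dots> = (\<Sum>p\<in>{p. desc t i p}. FF a b js (t @ [(p, col)]) i x $ I)"
    proof (rule sum.cong[OF refl])
      fix p
      have "i - 1 < length t" using less.prems by simp
      then have "(t @ [(p, col)]) ! (i - 1) = t ! (i - 1)" by (simp add: nth_append)
      then show "dapply (node_fun a b js (snd (t ! (i - 1))) I) (map (FF a b js (t @ [(p, col)])) (children (t @ [(p, col)]) i)) x
          = FF a b js (t @ [(p, col)]) i x $ I"
        using FF_unfold[of i "t @ [(p, col)]" a b js] i1 less.prems by simp
    qed
    finally show "Dv g (FF a b js t i) x $ I = (\<Sum>p\<in>{p. desc t i p}. FF a b js (t @ [(p, col)]) i x) $ I"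
      by simp
  qed
qed

definition FI :: "ltree \<Rightarrow> bool" where
  "FI t \<longleftrightarrow> t \<noteq> [] \<and> (\<forall>c\<in>{2..length t}. 1 \<le> fst (t ! (c - 1)) \<and> fst (t ! (c - 1)) < c)"

lemma desc_root: "FI t \<Longrightarrow> {p. desc t 1 p} = {1..length t}"
proof -
  assume F: "FI t"
  have "desc t 1 c" if "1 \<le> c" "c \<le> length t" for c
    using that
  proof (induction c rule: less_induct)
    case (less c)
    show ?case
    proof (cases "c = 1")
      case True then show ?thesis by (simp add: desc_refl)
    next
      case False
      define q where "q = fst (t ! (c - 1))"
      have q: "1 \<le> q" "q < c" using F less.prems False unfolding FI_def q_def by auto
      have "c \<in> set (children t q)" using q less.prems unfolding children_mem q_def by simp
      then have "desc t q c" by (auto intro: desc.intros)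
      moreover have "desc t 1 q" using q less by auto
      ultimately show ?thesis using desc_trans by blast
    qed
  qed
  moreover have "1 \<le> length t" using F unfolding FI_def by (cases t) auto
  ultimately show ?thesis using desc_le[of t 1] by fastforce
qed

lemma ELEM:
  fixes g :: "real^'d::finite \<Rightarrow> real^'d" and b :: "real^'d \<Rightarrow> real^'m::finite^'d"
  assumes NF: "\<forall>col I. Ck R (node_fun a b js col I)" and L: "length t \<le> R"
    and G: "\<And>I. node_fun a b js col I = (\<lambda>y. g y $ I)"
    and f: "Ck R f" and F: "FI t"
  shows "Ds g (elemF f a b js t) x = (\<Sum>p\<in>{1..length t}. elemF f a b js (t @ [(p, col)]) x)"
proof -
  let ?cs = "children t 1"
  have L1: "1 \<le> length t" using F unfolding FI_def by (cases t) auto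
  have lcs: "length ?cs \<le> length t - 1" by (rule children_length)
  have "Ds g (elemF f a b js t) x = (\<Sum>p\<in>{p. desc t 1 p}. dapply f (map (FF a b js (t @ [(p, col)])) (children (t @ [(p, col)]) 1)) x)"
    unfolding elemF_FF
  proof (rule NODE[OF _ L1 _ _ _ G])
    show "Ck (Suc (length ?cs)) f" by (rule Ck_mono[of R]) (use f L lcs L1 in auto)
  next
    fix c J z k assume c: "c \<in> set ?cs"
    then have "1 < c" "c \<le> length t" by (auto simp: children_mem)
    then have "Ck (R + c - length t) (\<lambda>x. FF a b js t c x $ J)" by (intro SMF[OF NF L]) auto
    moreover have "Suc 0 \<le> R + c - length t" using \<open>1 < c\<close> L by simp
    ultimately show "pdiff k (\<lambda>y. FF a b js t c y $ J) z" by (metis Ck_mono Ck_pdiff)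
  next
    fix c assume c: "c \<in> set ?cs"
    then have "1 < c" "c \<le> length t" by (auto simp: children_mem)
    then show "Dv g (FF a b js t c) = (\<lambda>x. \<Sum>p\<in>{p. desc t c p}. FF a b js (t @ [(p, col)]) c x)"
      by (intro DERIV_TREE[OF NF L G]) auto
  qed simp
  then show ?thesis unfolding desc_root[OF F] elemF_FF by simp
qed

lemma Ck_elemF:
  assumes NF: "\<forall>col I. Ck R (node_fun a b js col I)" and L: "length t \<le> R" and f: "Ck R f" and L1: "1 \<le> length t"
  shows "Ck (R + 1 - length t) (elemF f a b js t)"
  unfolding elemF_FF
proof (rule Ck_dapply)
  have lc: "length (children t 1) \<le> length t - 1" by (rule children_length)
  show "Ck (R + 1 - length t + length (map (FF a b js t) (children t 1))) f"
    by (rule Ck_mono[of R]) (use f L L1 lc in auto)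
next
  fix v J assume "v \<in> set (map (FF a b js t) (children t 1))"
  then obtain c where c: "c \<in> set (children t 1)" "v = FF a b js t c" by auto
  then have ic: "1 < c" "c \<le> length t" by (auto simp: children_mem)
  have "Ck (R + c - length t) (\<lambda>x. FF a b js t c x $ J)" using ic by (intro SMF[OF NF L]) auto
  then show "Ck (R + 1 - length t) (\<lambda>x. v x $ J)" using c ic L by (auto elim!: Ck_mono)
qed

lemma Fnode_js:
  assumes E: "\<forall>i\<in>{1..length t}. \<forall>I. node_fun a b js (snd (t ! (i - 1))) I = node_fun a b js' (snd (t ! (i - 1))) I"
  shows "1 \<le> i \<Longrightarrow> i \<le> length t \<Longrightarrow> Fnode n a b js t i = Fnode n a b js' t i"
proof (induction n arbitrary: i)
  case 0 then show ?case by simp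
next
  case (Suc n)
  have eq: "map (Fnode n a b js t) (children t i) = map (Fnode n a b js' t) (children t i)"
  proof (rule map_cong[OF refl])
    fix c assume "c \<in> set (children t i)"
    then have "i < c" "c \<le> length t" by (auto simp: children_mem)
    then show "Fnode n a b js t c = Fnode n a b js' t c" using Suc by (intro Suc.IH) auto
  qed
  have nf: "node_fun a b js (snd (t ! (i - 1))) = node_fun a b js' (snd (t ! (i - 1)))"
    using E Suc.prems by auto
  show ?case unfolding Fnode.simps(2) eq nf ..
qed

lemma elemF_js:
  assumes E: "\<forall>i\<in>{1..length t}. \<forall>I. node_fun a b js (snd (t ! (i - 1))) I = node_fun a b js' (snd (t ! (i - 1))) I"
  shows "elemF f a b js t = elemF f a b js' t"
proof -
  have eq: "map (Fnode (length t) a b js t) (children t 1) = map (Fnode (length t) a b js' t) (children t 1)"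
    by (rule map_cong[OF refl], rule Fnode_js[OF E]) (auto simp: children_mem)
  show ?thesis unfolding elemF_def eq ..
qed



lemma Ds_sum:
  assumes "finite A" "\<And>i k. i \<in> A \<Longrightarrow> pdiff k (u i) x"
  shows "Ds g (\<lambda>y. \<Sum>i\<in>A. u i y) x = (\<Sum>i\<in>A. Ds g (u i) x)"
proof -
  have "Ds g (\<lambda>y. \<Sum>i\<in>A. u i y) x = (\<Sum>k\<in>UNIV. \<Sum>i\<in>A. g x $ k * pd k (u i) x)"
    unfolding Ds_def using assms by (simp add: pd_sum sum_distrib_left)
  also have "\<dots> = (\<Sum>i\<in>A. Ds g (u i) x)" unfolding Ds_def by (rule sum.swap)
  finally show ?thesis .
qed

lemma Ds_cdiv:
  assumes "\<And>k. pdiff k u x"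
  shows "Ds g (\<lambda>y. u y / c) x = Ds g u x / c"
proof -
  have e: "(\<lambda>y. u y / c) = (\<lambda>y. u y * (1 / c))" by simp
  have "pd k (\<lambda>y. u y / c) x = pd k u x / c" for k
    using pd_mult[of k u x "\<lambda>y. 1/c", OF assms pdiff_const] by (simp add: pd_const)
  then show ?thesis unfolding Ds_def by (simp add: sum_divide_distrib)
qed

lemma Ck_cdiv: "Ck r u \<Longrightarrow> Ck r (\<lambda>x. u x / c)"
proof -
  assume "Ck r u"
  then have "Ck r (\<lambda>x. u x * (1 / c))" by (intro Ck_mult Ck_const)
  then show ?thesis by simp
qed

definition bc :: "(real^'d::finite \<Rightarrow> real^'m::finite^'d) \<Rightarrow> 'm \<Rightarrow> real^'d \<Rightarrow> real^'d" where
  "bc b j = (\<lambda>y. \<chi> I. b y $ I $ j)"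

lemma L0_decomp:
  fixes u :: "real^'d::finite \<Rightarrow> real" and b :: "real^'d \<Rightarrow> real^'m::finite^'d"
  assumes u: "Ck 2 u" and bb: "\<And>I j. Ck 1 (\<lambda>y. b y $ I $ j)"
  shows "L0 a b u x = Ds a u x + 1/2 * (\<Sum>j\<in>UNIV. Ds (bc b j) (Ds (bc b j) u) x)"
proof -
  have u2: "Ck (Suc (Suc 0)) u" using u by (simp add: numeral_2_eq_2)
  have pu: "\<And>l k z. pdiff k (pd l u) z" using u2 by (simp add: Ck_Suc)
  have pb: "\<And>l j k z. pdiff k (\<lambda>y. b y $ l $ j) z" using bb by (simp add: Ck_Suc)
  have D1: "Ds (bc b j) u = (\<lambda>y. \<Sum>l\<in>UNIV. b y $ l $ j * pd l u y)" for j
    unfolding Ds_def bc_def by (rule ext) simp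
  have D2: "Ds (bc b j) (Ds (bc b j) u) x =
     (\<Sum>k\<in>UNIV. \<Sum>l\<in>UNIV. b x $ k $ j * pd k (\<lambda>y. b y $ l $ j) x * pd l u x)
   + (\<Sum>k\<in>UNIV. \<Sum>l\<in>UNIV. b x $ k $ j * b x $ l $ j * pd k (pd l u) x)" for j
  proof -
    have "pd k (\<lambda>y. \<Sum>l\<in>UNIV. b y $ l $ j * pd l u y) x =
        (\<Sum>l\<in>UNIV. pd k (\<lambda>y. b y $ l $ j) x * pd l u x + b x $ l $ j * pd k (pd l u) x)" for k
      by (simp add: pd_sum pdiff_mult pd_mult pu pb)
    then show ?thesis unfolding D1 unfolding Ds_def bc_def
      by (simp add: sum_distrib_left sum.distrib algebra_simps)
  qed
  define C where "C = (\<Sum>j\<in>UNIV. \<Sum>k\<in>UNIV. \<Sum>l\<in>UNIV. b x $ k $ j * pd k (\<lambda>y. b y $ l $ j) x * pd l u x)"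
  define Q where "Q = (\<Sum>j\<in>UNIV. \<Sum>k\<in>UNIV. \<Sum>l\<in>UNIV. b x $ k $ j * b x $ l $ j * pd k (pd l u) x)"
  have R: "1/2 * (\<Sum>j\<in>UNIV. Ds (bc b j) (Ds (bc b j) u) x) = 1/2 * C + 1/2 * Q"
    unfolding D2 C_def Q_def by (simp add: sum.distrib algebra_simps)
  have Ceq: "(\<Sum>k\<in>UNIV. (\<Sum>k'\<in>UNIV. \<Sum>l'\<in>UNIV. b x $ k' $ l' * pd k' (\<lambda>y. b y $ k $ l') x) * pd k u x) = C"
  proof -
    have "(\<Sum>k\<in>UNIV. (\<Sum>k'\<in>UNIV. \<Sum>l'\<in>UNIV. b x $ k' $ l' * pd k' (\<lambda>y. b y $ k $ l') x) * pd k u x)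
        = (\<Sum>k\<in>UNIV. \<Sum>k'\<in>UNIV. \<Sum>l'\<in>UNIV. b x $ k' $ l' * pd k' (\<lambda>y. b y $ k $ l') x * pd k u x)"
      by (simp add: sum_distrib_right)
    also have "\<dots> = (\<Sum>k'\<in>UNIV. \<Sum>k\<in>UNIV. \<Sum>l'\<in>UNIV. b x $ k' $ l' * pd k' (\<lambda>y. b y $ k $ l') x * pd k u x)"
      by (rule sum.swap)
    also have "\<dots> = (\<Sum>k'\<in>UNIV. \<Sum>l'\<in>UNIV. \<Sum>k\<in>UNIV. b x $ k' $ l' * pd k' (\<lambda>y. b y $ k $ l') x * pd k u x)"
      by (rule sum.cong[OF refl], rule sum.swap)
    also have "\<dots> = (\<Sum>l'\<in>UNIV. \<Sum>k'\<in>UNIV. \<Sum>k\<in>UNIV. b x $ k' $ l' * pd k' (\<lambda>y. b y $ k $ l') x * pd k u x)"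
      by (rule sum.swap)
    also have "\<dots> = C" unfolding C_def ..
    finally show ?thesis .
  qed
  have Qeq: "(\<Sum>k\<in>UNIV. \<Sum>l\<in>UNIV. \<Sum>j\<in>UNIV. b x $ k $ j * b x $ l $ j * pd k (pd l u) x) = Q"
  proof -
    have "(\<Sum>k\<in>UNIV. \<Sum>l\<in>UNIV. \<Sum>j\<in>UNIV. b x $ k $ j * b x $ l $ j * pd k (pd l u) x)
        = (\<Sum>k\<in>UNIV. \<Sum>j\<in>UNIV. \<Sum>l\<in>UNIV. b x $ k $ j * b x $ l $ j * pd k (pd l u) x)"
      by (rule sum.cong[OF refl], rule sum.swap)
    also have "\<dots> = Q" unfolding Q_def by (rule sum.swap)
    finally show ?thesis .
  qed
  have "L0 a b u x = Ds a u x + 1/2 * C + 1/2 * Q"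
    unfolding L0_def atil_def Ds_def Ceq[symmetric] Qeq[symmetric]
    by (simp add: sum.distrib sum_distrib_left algebra_simps)
  then show ?thesis using R by simp
qed



lemma s_nodes_simps[simp]:
  "s_nodes [] = 0" "s_nodes (t @ u) = s_nodes t + s_nodes u"
  "s_nodes [(p, Det)] = 0" "s_nodes [(p, Sto k)] = 1" "s_nodes [(p, Root)] = 0"
  unfolding s_nodes_def by simp_all

lemma s_nodes_cons: "s_nodes (x # u) = s_nodes [x] + s_nodes u"
  unfolding s_nodes_def by simp

lemma d_nodes_simps[simp]:
  "d_nodes [] = 0" "d_nodes (t @ u) = d_nodes t + d_nodes u"
  "d_nodes [(p, Det)] = 1" "d_nodes [(p, Sto k)] = 0" "d_nodes [(p, Root)] = 0"
  unfolding d_nodes_def by simp_all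

lemma d_nodes_cons: "d_nodes (x # u) = d_nodes [x] + d_nodes u"
  unfolding d_nodes_def by simp

lemma rho_det: "rho (t @ [(p, Det)]) = Suc (rho t)"
  unfolding rho_def by simp

lemma rho_sto: "rho (t @ [(p, Sto k), (q, Sto k')]) = Suc (rho t)"
proof -
  have "s_nodes (t @ [(p, Sto k), (q, Sto k')]) = s_nodes t + 2"
    using s_nodes_simps(2)[of t "[(p, Sto k), (q, Sto k')]"] s_nodes_cons[of "(p, Sto k)" "[(q, Sto k')]"]
    by simp
  moreover have "d_nodes (t @ [(p, Sto k), (q, Sto k')]) = d_nodes t"
    using d_nodes_simps(2)[of t "[(p, Sto k), (q, Sto k')]"] d_nodes_cons[of "(p, Sto k)" "[(q, Sto k')]"]
    by simp
  ultimately show ?thesis unfolding rho_def by simp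
qed

lemma s_sto: "s_nodes (t @ [(p, Sto k), (q, Sto k')]) div 2 = s_nodes t div 2 + 1"
proof -
  have "s_nodes (t @ [(p, Sto k), (q, Sto k')]) = s_nodes t + 2"
    using s_nodes_simps(2)[of t "[(p, Sto k), (q, Sto k')]"] s_nodes_cons[of "(p, Sto k)" "[(q, Sto k')]"]
    by simp
  then show ?thesis by simp
qed

definition STO :: "ltree \<Rightarrow> bool" where
  "STO t \<longleftrightarrow> (\<forall>i k. 1 \<le> i \<and> i \<le> length t \<and> snd (t ! (i - 1)) = Sto k \<longrightarrow> 1 \<le> k \<and> k \<le> s_nodes t div 2)"

lemma LTS_inv: "t \<in> LTS \<Longrightarrow> FI t \<and> length t = 1 + d_nodes t + s_nodes t \<and> even (s_nodes t) \<and> STO t"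
proof (induction rule: LTS.induct)
  case base
  then show ?case unfolding FI_def STO_def by auto
next
  case (det t p)
  have "\<forall>c\<in>{2..length (t @ [(p, Det)])}. 1 \<le> fst ((t @ [(p, Det)]) ! (c - 1)) \<and> fst ((t @ [(p, Det)]) ! (c - 1)) < c"
  proof (rule ballI)
    fix c assume c: "c \<in> {2..length (t @ [(p, Det)])}"
    show "1 \<le> fst ((t @ [(p, Det)]) ! (c - 1)) \<and> fst ((t @ [(p, Det)]) ! (c - 1)) < c"
    proof (cases "c \<le> length t")
      case True
      then have "c - 1 < length t" using c by auto
      then have "(t @ [(p, Det)]) ! (c - 1) = t ! (c - 1)" by (simp add: nth_append)
      then show ?thesis using det.IH True c unfolding FI_def by auto
    next
      case False
      then have "c = Suc (length t)" using c by simp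
      then show ?thesis using det.hyps by (simp add: nth_append)
    qed
  qed
  then have FI: "FI (t @ [(p, Det)])" unfolding FI_def by simp
  have STO: "STO (t @ [(p, Det)])"
    unfolding STO_def
  proof (intro allI impI)
    fix i k assume a: "1 \<le> i \<and> i \<le> length (t @ [(p, Det)]) \<and> snd ((t @ [(p, Det)]) ! (i - 1)) = Sto k"
    show "1 \<le> k \<and> k \<le> s_nodes (t @ [(p, Det)]) div 2"
    proof (cases "i \<le> length t")
      case True
      then have "i - 1 < length t" using a by auto
      then have "(t @ [(p, Det)]) ! (i - 1) = t ! (i - 1)" by (simp add: nth_append)
      then show ?thesis using det.IH True a unfolding STO_def by auto
    next
      case False
      then have "i = Suc (length t)" using a by simp
      then show ?thesis using a by (simp add: nth_append)
    qed
  qed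
  show ?case using FI STO det.IH by simp
next
  case (sto t p q)
  define K where "K = s_nodes t div 2 + 1"
  let ?t = "t @ [(p, Sto K), (q, Sto K)]"
  have len: "length ?t = length t + 2" by simp
  have nth: "?t ! (c - 1) = (if c \<le> length t then t ! (c - 1) else if c = Suc (length t) then (p, Sto K) else (q, Sto K))"
    if "1 \<le> c" "c \<le> length t + 2" for c
    using that by (auto simp: nth_append nth_Cons' not_le)
  have s: "s_nodes ?t = s_nodes t + 2"
    using s_nodes_simps(2)[of t "[(p, Sto K), (q, Sto K)]"] s_nodes_cons[of "(p, Sto K)" "[(q, Sto K)]"]
    by simp
  have d: "d_nodes ?t = d_nodes t"
    using d_nodes_simps(2)[of t "[(p, Sto K), (q, Sto K)]"] d_nodes_cons[of "(p, Sto K)" "[(q, Sto K)]"]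
    by simp
  have "\<forall>c\<in>{2..length ?t}. 1 \<le> fst (?t ! (c - 1)) \<and> fst (?t ! (c - 1)) < c"
  proof (rule ballI)
    fix c assume c: "c \<in> {2..length ?t}"
    then show "1 \<le> fst (?t ! (c - 1)) \<and> fst (?t ! (c - 1)) < c"
      using nth[of c] sto.IH sto.hyps unfolding FI_def by (auto split: if_splits)
  qed
  then have FI: "FI ?t" unfolding FI_def by simp
  have STO: "STO ?t"
    unfolding STO_def
  proof (intro allI impI)
    fix i k assume a: "1 \<le> i \<and> i \<le> length ?t \<and> snd (?t ! (i - 1)) = Sto k"
    then have a': "snd ((if i \<le> length t then t ! (i - 1) else if i = Suc (length t) then (p, Sto K) else (q, Sto K))) = Sto k"
      using nth[of i] by simp
    show "1 \<le> k \<and> k \<le> s_nodes ?t div 2"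
    proof (cases "i \<le> length t")
      case True
      then show ?thesis using a' a sto.IH unfolding STO_def s by fastforce
    next
      case False
      then have "k = K" using a' by (auto split: if_splits)
      then show ?thesis using s unfolding K_def by simp
    qed
  qed
  show ?case using FI STO sto.IH s d unfolding K_def[symmetric] by simp
qed

lemma LTS_len: "t \<in> LTS \<Longrightarrow> length t \<le> 1 + 2 * rho t"
  using LTS_inv[of t] unfolding rho_def by auto

definition SS :: "nat \<Rightarrow> ltree set" where "SS m = {t \<in> LTS. rho t = m}"

definition DI :: "nat \<Rightarrow> ltree set" where
  "DI m = (\<lambda>(t, p). t @ [(p, Det)]) ` (SIGMA t:SS m. {1..length t})"

definition SI :: "nat \<Rightarrow> ltree set" where
  "SI m = (\<lambda>(t, p, q). t @ [(p, Sto (s_nodes t div 2 + 1)), (q, Sto (s_nodes t div 2 + 1))]) `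
     (SIGMA t:SS m. {1..length t} \<times> {1..Suc (length t)})"

lemma rho_base: "rho [(0, Root)] = 0" unfolding rho_def by simp

lemma SS_0: "SS 0 = {[(0, Root)]}"
proof -
  have "t = [(0, Root)]" if "t \<in> LTS" "rho t = 0" for t
    using that by (cases rule: LTS.cases) (auto simp: rho_det rho_sto)
  then show ?thesis unfolding SS_def by (auto intro: LTS.base simp: rho_base)
qed

lemma SS_Suc: "SS (Suc m) = DI m \<union> SI m"
proof
  show "SS (Suc m) \<subseteq> DI m \<union> SI m"
  proof
    fix t' assume "t' \<in> SS (Suc m)"
    then have t': "t' \<in> LTS" "rho t' = Suc m" unfolding SS_def by auto
    then show "t' \<in> DI m \<union> SI m"
    proof (cases rule: LTS.cases)
      case base then show ?thesis using t' rho_base by simp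
    next
      case (det t p)
      then have "t \<in> SS m" using t' rho_det unfolding SS_def by auto
      then show ?thesis unfolding DI_def using det by (intro UnI1 image_eqI[where x="(t, p)"]) auto
    next
      case (sto t p q)
      then have "t \<in> SS m" using t' rho_sto unfolding SS_def by auto
      then show ?thesis unfolding SI_def using sto by (intro UnI2 image_eqI[where x="(t, p, q)"]) auto
    qed
  qed
next
  show "DI m \<union> SI m \<subseteq> SS (Suc m)"
  proof
    fix t' assume "t' \<in> DI m \<union> SI m"
    then show "t' \<in> SS (Suc m)"
    proof
      assume "t' \<in> DI m"
      then obtain t p where tp: "t' = t @ [(p, Det)]" "t \<in> SS m" "p \<in> {1..length t}" unfolding DI_def by auto
      have "t' \<in> LTS" unfolding tp(1) by (rule LTS.det) (use tp in \<open>auto simp: SS_def\<close>)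
      then show ?thesis using tp rho_det unfolding SS_def by auto
    next
      assume "t' \<in> SI m"
      then obtain t p q where tp: "t' = t @ [(p, Sto (s_nodes t div 2 + 1)), (q, Sto (s_nodes t div 2 + 1))]"
        "t \<in> SS m" "p \<in> {1..length t}" "q \<in> {1..Suc (length t)}" unfolding SI_def by auto
      have "t' \<in> LTS" unfolding tp(1) by (rule LTS.sto) (use tp in \<open>auto simp: SS_def\<close>)
      then show ?thesis using tp rho_sto unfolding SS_def by auto
    qed
  qed
qed

lemma DI_SI_disj: "DI m \<inter> SI m = {}"
  unfolding DI_def SI_def by auto

lemma inj_DI: "inj_on (\<lambda>(t, p). t @ [(p, Det)]) A"
  by (auto simp: inj_on_def)

lemma inj_SI: "inj_on (\<lambda>(t, p, q). t @ [(p, Sto (s_nodes t div 2 + 1)), (q, Sto (s_nodes t div 2 + 1))]) A"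
proof (rule inj_onI)
  fix x y
  assume e: "(\<lambda>(t, p, q). t @ [(p, Sto (s_nodes t div 2 + 1)), (q, Sto (s_nodes t div 2 + 1))]) x =
             (\<lambda>(t, p, q). t @ [(p, Sto (s_nodes t div 2 + 1)), (q, Sto (s_nodes t div 2 + 1))]) y"
  obtain t p q where x: "x = (t, p, q)" by (cases x) auto
  obtain t2 p2 q2 where y: "y = (t2, p2, q2)" by (cases y) auto
  from e have "(t @ [(p, Sto (s_nodes t div 2 + 1))]) @ [(q, Sto (s_nodes t div 2 + 1))] =
          (t2 @ [(p2, Sto (s_nodes t2 div 2 + 1))]) @ [(q2, Sto (s_nodes t2 div 2 + 1))]" by (simp add: x y)
  then show "x = y" by (simp add: x y)
qed

lemma finite_SS: "finite (SS m)"
proof (induction m)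
  case 0 then show ?case by (simp add: SS_0)
next
  case (Suc m)
  then show ?case unfolding SS_Suc DI_def SI_def by (intro finite_UnI finite_imageI finite_SigmaI) auto
qed



lemma Ck_pdiff1: "Ck r u \<Longrightarrow> 1 \<le> r \<Longrightarrow> pdiff k u x"
  using Ck_pdiff[of 0 u k x] Ck_mono[of r u 1] by simp

lemma FI_append: "FI t \<Longrightarrow> 1 \<le> p \<Longrightarrow> p \<le> length t \<Longrightarrow> FI (t @ [(p, col)])"
proof -
  assume F: "FI t" and p: "1 \<le> p" "p \<le> length t"
  have "\<forall>c\<in>{2..length (t @ [(p, col)])}. 1 \<le> fst ((t @ [(p, col)]) ! (c - 1)) \<and> fst ((t @ [(p, col)]) ! (c - 1)) < c"
  proof (rule ballI)
    fix c assume c: "c \<in> {2..length (t @ [(p, col)])}"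
    show "1 \<le> fst ((t @ [(p, col)]) ! (c - 1)) \<and> fst ((t @ [(p, col)]) ! (c - 1)) < c"
    proof (cases "c \<le> length t")
      case True
      then have "c - 1 < length t" using c by auto
      then have "(t @ [(p, col)]) ! (c - 1) = t ! (c - 1)" by (simp add: nth_append)
      then show ?thesis using F True c unfolding FI_def by auto
    next
      case False
      then have "c = Suc (length t)" using c by simp
      then show ?thesis using p by (simp add: nth_append)
    qed
  qed
  then show ?thesis unfolding FI_def by simp
qed

definition WW :: "(real^'d::finite \<Rightarrow> real) \<Rightarrow> (real^'d \<Rightarrow> real^'d) \<Rightarrow> (real^'d \<Rightarrow> real^'m::finite^'d) \<Rightarrow> ltree \<Rightarrow> real^'d \<Rightarrow> real" where
  "WW f a b t x = (\<Sum>js \<in> {js::'m list. length js = s_nodes t div 2}. elemF f a b js t x / 2 ^ (s_nodes t div 2))"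

context
  fixes n :: nat and f :: "real^'d::finite \<Rightarrow> real" and a :: "real^'d \<Rightarrow> real^'d"
    and b :: "real^'d \<Rightarrow> real^'m::finite^'d"
  assumes Af: "Ck (2 * n) f" and Aa: "\<forall>I. Ck (2 * n) (\<lambda>y. a y $ I)"
    and Ab: "\<forall>I j. Ck (2 * n + 1) (\<lambda>y. b y $ I $ j)"
begin

lemma NF: "\<forall>col I. Ck (2 * n) (node_fun a b js col I)"
proof (intro allI)
  fix col I
  show "Ck (2 * n) (node_fun a b js col I)"
  proof (cases col)
    case Root then show ?thesis by (simp add: Ck_const)
  next
    case Det then show ?thesis using Aa by simp
  next
    case (Sto k)
    have "Ck (2 * n + 1) (\<lambda>y. b y $ I $ (js ! (k - 1)))" using Ab by simp
    then show ?thesis using Sto by (simp add: Ck_mono[of "2 * n + 1"])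
  qed
qed

lemma bb: "Ck 1 (\<lambda>y. b y $ I $ j)"
  using Ab Ck_mono[of "2 * n + 1" "\<lambda>y. b y $ I $ j" 1] by simp

lemma Gdet: "node_fun a b js Det I = (\<lambda>y. a y $ I)" by simp

lemma Gsto: "length js = k \<Longrightarrow> node_fun a b (js @ [j]) (Sto (k + 1)) I = (\<lambda>y. bc b j y $ I)"
  by (simp add: bc_def nth_append)

context
  fixes m t
  assumes mn: "m < n" and tS: "t \<in> SS m"
begin

lemma tLTS: "t \<in> LTS" using tS unfolding SS_def by simp

lemma Lt: "length t + 1 \<le> 2 * n"
  using LTS_len[OF tLTS] tS mn unfolding SS_def by auto

lemma FIt: "FI t" using LTS_inv[OF tLTS] by simp
lemma STOt: "STO t" using LTS_inv[OF tLTS] by simp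
lemma L1: "1 \<le> length t" using FIt unfolding FI_def by (cases t) auto

lemma CkE: "Ck 2 (elemF f a b js t)"
  using Ck_elemF[OF NF _ Af L1, of js] Lt Ck_mono[of "2 * n + 1 - length t" "elemF f a b js t" 2] by simp

lemma CkE1: "p \<in> {1..length t} \<Longrightarrow> Ck 1 (elemF f a b js (t @ [(p, col)]))"
  using Ck_elemF[OF NF _ Af, of "t @ [(p, col)]" js] Lt Ck_mono[of "2 * n - length t" "elemF f a b js (t @ [(p, col)])" 1]
  by simp

lemma CkW: "Ck 2 (WW f a b t)"
proof -
  have "Ck 2 (\<lambda>x. \<Sum>js \<in> {js::'m list. length js = s_nodes t div 2}. elemF f a b js t x / 2 ^ (s_nodes t div 2))"
    by (intro Ck_sum finite_lists_eq Ck_cdiv CkE)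
  then show ?thesis unfolding WW_def by simp
qed

lemma DsA: "Ds a (WW f a b t) x = (\<Sum>p\<in>{1..length t}. WW f a b (t @ [(p, Det)]) x)"
proof -
  define h where "h = s_nodes t div 2"
  define J where "J = {js::'m list. length js = h}"
  have "Ds a (WW f a b t) x = (\<Sum>js\<in>J. Ds a (\<lambda>y. elemF f a b js t y / 2 ^ h) x)"
    unfolding WW_def h_def[symmetric] J_def[symmetric]
    by (rule Ds_sum) (auto simp: J_def finite_lists_eq intro!: Ck_pdiff1[OF Ck_cdiv[OF CkE]])
  also have "\<dots> = (\<Sum>js\<in>J. Ds a (elemF f a b js t) x / 2 ^ h)"
    by (rule sum.cong[OF refl], rule Ds_cdiv) (auto intro: Ck_pdiff1[OF CkE])
  also have "\<dots> = (\<Sum>js\<in>J. (\<Sum>p\<in>{1..length t}. elemF f a b js (t @ [(p, Det)]) x) / 2 ^ h)"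
    using ELEM[OF NF _ Gdet Af FIt] Lt by simp
  also have "\<dots> = (\<Sum>js\<in>J. \<Sum>p\<in>{1..length t}. elemF f a b js (t @ [(p, Det)]) x / 2 ^ h)"
    by (simp add: sum_divide_distrib)
  also have "\<dots> = (\<Sum>p\<in>{1..length t}. \<Sum>js\<in>J. elemF f a b js (t @ [(p, Det)]) x / 2 ^ h)"
    by (rule sum.swap)
  also have "\<dots> = (\<Sum>p\<in>{1..length t}. WW f a b (t @ [(p, Det)]) x)"
    unfolding WW_def J_def h_def by simp
  finally show ?thesis .
qed

definition KK where "KK = s_nodes t div 2 + 1"

definition VV :: "'m \<Rightarrow> real^'d \<Rightarrow> real" where
  "VV j x = (\<Sum>js \<in> {js::'m list. length js = s_nodes t div 2}.
      (\<Sum>p\<in>{1..length t}. elemF f a b (js @ [j]) (t @ [(p, Sto KK)]) x) / 2 ^ (s_nodes t div 2))"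

lemma elemF_ext: "length js = s_nodes t div 2 \<Longrightarrow> elemF f a b js t = elemF f a b (js @ [j]) t"
proof (rule elemF_js, intro ballI allI)
  fix i I assume l: "length js = s_nodes t div 2" and i: "i \<in> {1..length t}"
  show "node_fun a b js (snd (t ! (i - 1))) I = node_fun a b (js @ [j]) (snd (t ! (i - 1))) I"
  proof (cases "snd (t ! (i - 1))")
    case (Sto k)
    then have "1 \<le> k" "k \<le> s_nodes t div 2" using STOt i unfolding STO_def by auto
    then have "k - 1 < length js" using l by simp
    then show ?thesis using Sto by (simp add: nth_append)
  qed auto
qed

lemma VB: "Ds (bc b j) (WW f a b t) = VV j"
proof (rule ext)
  fix x
  define h where "h = s_nodes t div 2"
  define J where "J = {js::'m list. length js = h}"
  have "Ds (bc b j) (WW f a b t) x = (\<Sum>js\<in>J. Ds (bc b j) (\<lambda>y. elemF f a b js t y / 2 ^ h) x)"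
    unfolding WW_def h_def[symmetric] J_def[symmetric]
    by (rule Ds_sum) (auto simp: J_def finite_lists_eq intro!: Ck_pdiff1[OF Ck_cdiv[OF CkE]])
  also have "\<dots> = (\<Sum>js\<in>J. Ds (bc b j) (elemF f a b js t) x / 2 ^ h)"
    by (rule sum.cong[OF refl], rule Ds_cdiv) (auto intro: Ck_pdiff1[OF CkE])
  also have "\<dots> = (\<Sum>js\<in>J. (\<Sum>p\<in>{1..length t}. elemF f a b (js @ [j]) (t @ [(p, Sto KK)]) x) / 2 ^ h)"
  proof (rule sum.cong[OF refl])
    fix js assume "js \<in> J"
    then have l: "length js = h" unfolding J_def by simp
    have "Ds (bc b j) (elemF f a b js t) x = Ds (bc b j) (elemF f a b (js @ [j]) t) x"
      using elemF_ext l unfolding h_def by simp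
    also have "\<dots> = (\<Sum>p\<in>{1..length t}. elemF f a b (js @ [j]) (t @ [(p, Sto KK)]) x)"
      using ELEM[OF NF _ Gsto[OF l] Af FIt] Lt unfolding KK_def h_def by simp
    finally show "Ds (bc b j) (elemF f a b js t) x / 2 ^ h = (\<Sum>p\<in>{1..length t}. elemF f a b (js @ [j]) (t @ [(p, Sto KK)]) x) / 2 ^ h"
      by simp
  qed
  finally show "Ds (bc b j) (WW f a b t) x = VV j x" unfolding VV_def J_def h_def .
qed

lemma CkV: "Ck 1 (VV j)"
proof -
  have "Ck 1 (\<lambda>x. \<Sum>js \<in> {js::'m list. length js = s_nodes t div 2}.
      (\<Sum>p\<in>{1..length t}. elemF f a b (js @ [j]) (t @ [(p, Sto KK)]) x) / 2 ^ (s_nodes t div 2))"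
    by (intro Ck_sum finite_lists_eq Ck_cdiv finite_atLeastAtMost CkE1)
  then show ?thesis unfolding VV_def by simp
qed

lemma DsB: "Ds (bc b j) (VV j) x = (\<Sum>js \<in> {js::'m list. length js = s_nodes t div 2}.
      (\<Sum>p\<in>{1..length t}. \<Sum>q\<in>{1..Suc (length t)}. elemF f a b (js @ [j]) (t @ [(p, Sto KK), (q, Sto KK)]) x) / 2 ^ (s_nodes t div 2))"
proof -
  define h where "h = s_nodes t div 2"
  define J where "J = {js::'m list. length js = h}"
  have "Ds (bc b j) (VV j) x = (\<Sum>js\<in>J. Ds (bc b j) (\<lambda>y. (\<Sum>p\<in>{1..length t}. elemF f a b (js @ [j]) (t @ [(p, Sto KK)]) y) / 2 ^ h) x)"
    unfolding VV_def h_def[symmetric] J_def[symmetric]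
    by (rule Ds_sum) (auto simp: J_def finite_lists_eq intro!: Ck_pdiff1[OF Ck_cdiv] Ck_sum CkE1)
  also have "\<dots> = (\<Sum>js\<in>J. Ds (bc b j) (\<lambda>y. \<Sum>p\<in>{1..length t}. elemF f a b (js @ [j]) (t @ [(p, Sto KK)]) y) x / 2 ^ h)"
    by (rule sum.cong[OF refl], rule Ds_cdiv) (auto intro!: Ck_pdiff1[of 1] Ck_sum CkE1)
  also have "\<dots> = (\<Sum>js\<in>J. (\<Sum>p\<in>{1..length t}. Ds (bc b j) (elemF f a b (js @ [j]) (t @ [(p, Sto KK)])) x) / 2 ^ h)"
    by (rule sum.cong[OF refl], subst Ds_sum) (auto intro!: Ck_pdiff1[of 1] CkE1)
  also have "\<dots> = (\<Sum>js\<in>J. (\<Sum>p\<in>{1..length t}. \<Sum>q\<in>{1..Suc (length t)}. elemF f a b (js @ [j]) (t @ [(p, Sto KK), (q, Sto KK)]) x) / 2 ^ h)"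
  proof (rule sum.cong[OF refl])
    fix js assume "js \<in> J"
    then have l: "length js = h" unfolding J_def by simp
    show "(\<Sum>p\<in>{1..length t}. Ds (bc b j) (elemF f a b (js @ [j]) (t @ [(p, Sto KK)])) x) / 2 ^ h =
        (\<Sum>p\<in>{1..length t}. \<Sum>q\<in>{1..Suc (length t)}. elemF f a b (js @ [j]) (t @ [(p, Sto KK), (q, Sto KK)]) x) / 2 ^ h"
    proof (rule arg_cong[where f = "\<lambda>z. z / 2 ^ h"], rule sum.cong[OF refl])
      fix p assume p: "p \<in> {1..length t}"
      have F: "FI (t @ [(p, Sto KK)])" using FI_append[OF FIt] p by simp
      have "Ds (bc b j) (elemF f a b (js @ [j]) (t @ [(p, Sto KK)])) x =
          (\<Sum>q\<in>{1..length (t @ [(p, Sto KK)])}. elemF f a b (js @ [j]) ((t @ [(p, Sto KK)]) @ [(q, Sto KK)]) x)"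
        using ELEM[OF NF _ Gsto[OF l] Af F] Lt unfolding KK_def h_def by simp
      then show "Ds (bc b j) (elemF f a b (js @ [j]) (t @ [(p, Sto KK)])) x =
          (\<Sum>q\<in>{1..Suc (length t)}. elemF f a b (js @ [j]) (t @ [(p, Sto KK), (q, Sto KK)]) x)"
        by simp
    qed
  qed
  finally show ?thesis unfolding J_def h_def .
qed

lemma HB: "1/2 * (\<Sum>j\<in>UNIV. Ds (bc b j) (VV j) x) =
    (\<Sum>p\<in>{1..length t}. \<Sum>q\<in>{1..Suc (length t)}. WW f a b (t @ [(p, Sto KK), (q, Sto KK)]) x)"
proof -
  define h where "h = s_nodes t div 2"
  define J where "J = {js::'m list. length js = h}"
  define E where "E js p q = elemF f a b js (t @ [(p, Sto KK), (q, Sto KK)]) x" for js p q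
  define Q where "Q = {1..Suc (length t)}"
  have fQ: "finite Q" unfolding Q_def by simp
  have "1/2 * (\<Sum>j\<in>UNIV. Ds (bc b j) (VV j) x) = (\<Sum>j\<in>UNIV. \<Sum>js\<in>J. \<Sum>p\<in>{1..length t}. \<Sum>q\<in>{1..Suc (length t)}. E (js @ [j]) p q / 2 ^ (Suc h))"
    unfolding DsB h_def[symmetric] J_def[symmetric] E_def Q_def[symmetric] sum_distrib_left
  proof (intro sum.cong refl)
    fix j js
    show "1 / 2 * ((\<Sum>p = 1..length t. \<Sum>q\<in>Q. elemF f a b (js @ [j]) (t @ [(p, Sto KK), (q, Sto KK)]) x) / 2 ^ h) =
         (\<Sum>p = 1..length t. \<Sum>q\<in>Q. elemF f a b (js @ [j]) (t @ [(p, Sto KK), (q, Sto KK)]) x / 2 ^ Suc h)"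
      by (simp only: sum_divide_distrib[symmetric]) simp
  qed
  also have "\<dots> = (\<Sum>js\<in>J. \<Sum>j\<in>UNIV. \<Sum>p\<in>{1..length t}. \<Sum>q\<in>{1..Suc (length t)}. E (js @ [j]) p q / 2 ^ (Suc h))"
    by (rule sum.swap)
  also have "\<dots> = (\<Sum>js\<in>J. \<Sum>p\<in>{1..length t}. \<Sum>j\<in>UNIV. \<Sum>q\<in>{1..Suc (length t)}. E (js @ [j]) p q / 2 ^ (Suc h))"
    by (rule sum.cong[OF refl], rule sum.swap)
  also have "\<dots> = (\<Sum>js\<in>J. \<Sum>p\<in>{1..length t}. \<Sum>q\<in>{1..Suc (length t)}. \<Sum>j\<in>UNIV. E (js @ [j]) p q / 2 ^ (Suc h))"
    by (rule sum.cong[OF refl], rule sum.cong[OF refl], rule sum.swap)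
  also have "\<dots> = (\<Sum>p\<in>{1..length t}. \<Sum>js\<in>J. \<Sum>q\<in>{1..Suc (length t)}. \<Sum>j\<in>UNIV. E (js @ [j]) p q / 2 ^ (Suc h))"
    by (rule sum.swap)
  also have "\<dots> = (\<Sum>p\<in>{1..length t}. \<Sum>q\<in>{1..Suc (length t)}. \<Sum>js\<in>J. \<Sum>j\<in>UNIV. E (js @ [j]) p q / 2 ^ (Suc h))"
    by (rule sum.cong[OF refl], rule sum.swap)
  also have "\<dots> = (\<Sum>p\<in>{1..length t}. \<Sum>q\<in>{1..Suc (length t)}. WW f a b (t @ [(p, Sto KK), (q, Sto KK)]) x)"
  proof (intro sum.cong refl)
    fix p q
    have sd: "s_nodes (t @ [(p, Sto KK), (q, Sto KK)]) div 2 = Suc h" unfolding h_def using s_sto by simp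
    have "WW f a b (t @ [(p, Sto KK), (q, Sto KK)]) x = (\<Sum>js'\<in>{js::'m list. length js = Suc h}. E js' p q / 2 ^ Suc h)"
      unfolding WW_def sd E_def ..
    also have "\<dots> = (\<Sum>(js, j)\<in>J \<times> UNIV. E (js @ [j]) p q / 2 ^ Suc h)"
      using sum.reindex_bij_betw[OF lists_Suc_bij[of h], of "\<lambda>js'. E js' p q / 2 ^ Suc h"] unfolding J_def
      by (simp add: case_prod_unfold)
    also have "\<dots> = (\<Sum>js\<in>J. \<Sum>j\<in>UNIV. E (js @ [j]) p q / 2 ^ Suc h)"
      by (rule sum.cartesian_product[symmetric])
    finally show "(\<Sum>js\<in>J. \<Sum>j\<in>UNIV. E (js @ [j]) p q / 2 ^ Suc h) = WW f a b (t @ [(p, Sto KK), (q, Sto KK)]) x" by simp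
  qed
  finally show ?thesis .
qed

lemma HB': "1/2 * (\<Sum>j\<in>UNIV. Ds (bc b j) (VV j) x) =
    (\<Sum>p\<in>{1..length t}. \<Sum>q\<in>{1..Suc (length t)}. WW f a b (t @ [(p, Sto (s_nodes t div 2 + 1)), (q, Sto (s_nodes t div 2 + 1))]) x)"
  using HB unfolding KK_def .

end

lemma rhs_sum: "(\<Sum>t'\<in>SS (Suc m). WW f a b t' x) = (\<Sum>t\<in>SS m.
   (\<Sum>p\<in>{1..length t}. WW f a b (t @ [(p, Det)]) x) +
   (\<Sum>p\<in>{1..length t}. \<Sum>q\<in>{1..Suc (length t)}. WW f a b (t @ [(p, Sto (s_nodes t div 2 + 1)), (q, Sto (s_nodes t div 2 + 1))]) x))"
proof -
  have fS: "finite (SS m)" by (rule finite_SS)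
  have fD: "finite (DI m)" and fSI: "finite (SI m)" using finite_SS[of "Suc m"] unfolding SS_Suc by auto
  have "(\<Sum>t'\<in>SS (Suc m). WW f a b t' x) = (\<Sum>t'\<in>DI m. WW f a b t' x) + (\<Sum>t'\<in>SI m. WW f a b t' x)"
    unfolding SS_Suc by (rule sum.union_disjoint[OF fD fSI DI_SI_disj])
  also have "(\<Sum>t'\<in>DI m. WW f a b t' x) = (\<Sum>(t, p)\<in>(SIGMA t:SS m. {1..length t}). WW f a b (t @ [(p, Det)]) x)"
    unfolding DI_def by (subst sum.reindex[OF inj_DI]) (simp add: case_prod_unfold)
  also have "\<dots> = (\<Sum>t\<in>SS m. \<Sum>p\<in>{1..length t}. WW f a b (t @ [(p, Det)]) x)"
    by (rule sum.Sigma[symmetric]) (auto simp: fS)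
  also have "(\<Sum>t'\<in>SI m. WW f a b t' x) = (\<Sum>(t, pq)\<in>(SIGMA t:SS m. {1..length t} \<times> {1..Suc (length t)}).
       WW f a b (t @ [(fst pq, Sto (s_nodes t div 2 + 1)), (snd pq, Sto (s_nodes t div 2 + 1))]) x)"
    unfolding SI_def by (subst sum.reindex[OF inj_SI]) (simp add: case_prod_unfold)
  also have "\<dots> = (\<Sum>t\<in>SS m. \<Sum>pq\<in>{1..length t} \<times> {1..Suc (length t)}.
       WW f a b (t @ [(fst pq, Sto (s_nodes t div 2 + 1)), (snd pq, Sto (s_nodes t div 2 + 1))]) x)"
    by (rule sum.Sigma[symmetric]) (auto simp: fS)
  also have "\<dots> = (\<Sum>t\<in>SS m. \<Sum>p\<in>{1..length t}. \<Sum>q\<in>{1..Suc (length t)}.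
       WW f a b (t @ [(p, Sto (s_nodes t div 2 + 1)), (q, Sto (s_nodes t div 2 + 1))]) x)"
    by (rule sum.cong[OF refl]) (simp only: sum.cartesian_product case_prod_unfold)
  finally show ?thesis by (simp add: sum.distrib)
qed

lemma step:
  assumes mn: "m < n"
  shows "L0 a b (\<lambda>x. \<Sum>t\<in>SS m. WW f a b t x) x = (\<Sum>t\<in>SS (Suc m). WW f a b t x)"
proof -
  define U where "U = (\<lambda>x. \<Sum>t\<in>SS m. WW f a b t x)"
  have fS: "finite (SS m)" by (rule finite_SS)
  have CkU: "Ck 2 U" unfolding U_def by (intro Ck_sum fS CkW[OF mn])
  have pW: "\<And>t k y. t \<in> SS m \<Longrightarrow> pdiff k (WW f a b t) y" using CkW[OF mn] Ck_pdiff1 by fastforce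
  have pV: "\<And>t k y j. t \<in> SS m \<Longrightarrow> pdiff k (VV t j) y" using CkV[OF mn] Ck_pdiff1 by fastforce
  have A: "Ds a U x = (\<Sum>t\<in>SS m. \<Sum>p\<in>{1..length t}. WW f a b (t @ [(p, Det)]) x)"
    unfolding U_def by (subst Ds_sum[OF fS pW]) (auto simp: DsA[OF mn])
  have B1: "Ds (bc b j) U = (\<lambda>y. \<Sum>t\<in>SS m. VV t j y)" for j
    unfolding U_def by (rule ext, subst Ds_sum[OF fS pW]) (auto simp: VB[OF mn])
  have B2: "Ds (bc b j) (Ds (bc b j) U) x = (\<Sum>t\<in>SS m. Ds (bc b j) (VV t j) x)" for j
    unfolding B1 by (rule Ds_sum[OF fS pV])
  have "1/2 * (\<Sum>j\<in>UNIV. Ds (bc b j) (Ds (bc b j) U) x) = (\<Sum>t\<in>SS m. 1/2 * (\<Sum>j\<in>UNIV. Ds (bc b j) (VV t j) x))"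
    unfolding B2 by (subst sum.swap) (simp add: sum_distrib_left)
  also have "\<dots> = (\<Sum>t\<in>SS m. \<Sum>p\<in>{1..length t}. \<Sum>q\<in>{1..Suc (length t)}.
       WW f a b (t @ [(p, Sto (s_nodes t div 2 + 1)), (q, Sto (s_nodes t div 2 + 1))]) x)"
    apply (rule sum.cong[OF refl])
    subgoal for t using HB'[OF mn, of t x] by simp
    done
  finally have B: "1/2 * (\<Sum>j\<in>UNIV. Ds (bc b j) (Ds (bc b j) U) x) = \<dots>" .
  show ?thesis unfolding U_def[symmetric] L0_decomp[OF CkU bb] A B rhs_sum by (simp add: sum.distrib)
qed

lemma iter: "m \<le> n \<Longrightarrow> ((L0 a b) ^^ m) f = (\<lambda>x. \<Sum>t\<in>SS m. WW f a b t x)"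
proof (induction m)
  case 0
  have c: "children [(0, Root)] 1 = []" unfolding children_def by simp
  have "WW f a b [(0, Root)] x = f x" for x
  proof -
    have "{js::'m list. length js = 0} = {[]}" by auto
    then show ?thesis unfolding WW_def elemF_def c by (simp add: dapply_Nil)
  qed
  then show ?case by (simp add: SS_0)
next
  case (Suc m)
  then have "((L0 a b) ^^ m) f = (\<lambda>x. \<Sum>t\<in>SS m. WW f a b t x)" by simp
  then show ?case using step[of m] Suc.prems by (auto intro!: ext)
qed

end


theorem mainTheorem5:
  fixes n :: nat
    and f :: "real^'d::finite \<Rightarrow> real"
    and a :: "real^'d \<Rightarrow> real^'d"
    and b :: "real^'d \<Rightarrow> real^'m::finite^'d"
    and x0 :: "real^'d"
  assumes "Ck (2 * n) f"
    and "\<forall>I. Ck (2 * n) (\<lambda>y. a y $ I)"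
    and "\<forall>I j. Ck (2 * n + 1) (\<lambda>y. b y $ I $ j)"
  shows "((L0 a b) ^^ n) f x0 =
     (\<Sum>t \<in> {t \<in> LTS. rho t = n}. \<Sum>js \<in> {js::'m list. length js = s_nodes t div 2}.
        elemF f a b js t x0 / 2 ^ (s_nodes t div 2))"
proof -
  have "((L0 a b) ^^ n) f = (\<lambda>x. \<Sum>t\<in>SS n. WW f a b t x)"
    by (rule iter[OF assms order_refl])
  then show ?thesis by (simp add: SS_def WW_def)
qed

end
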